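(* Let $\mathbf{H}\in\mathbb{H}^4$. The following are equivalent: (1) $\mathbf{Cov}_2(\mathbf{H})$ is transversely isotropic; (2) $\mathbf{H}$ is tetragonal, trigonal or transversely isotropic; (3) the pair $(\mathbf{d}_2,\mathbf{c}_3)$ is transversely isotropic.
   Context: $\mathbb{H}^4$ is the space of totally symmetric traceless fourth-order tensors on $\mathbb{R}^3$, with $SO(3)$-action $(g\star\mathbf{T})(x_1,\dots,x_n)=\mathbf{T}(g^{-1}x_1,\dots,g^{-1}x_n)$. $\mathbf{Cov}_2(\mathbf{H})\subset\mathrm{Sym}^2(\mathbb{R}^3)$ is the set of values at $\mathbf{H}$ of all $SO(3)$-equivariant polynomial maps $\mathbb{H}^4\to\mathrm{Sym}^2(\mathbb{R}^3)$. $(\mathbf{H}:\mathbf{H})_{ijkl}=H_{ijmn}H_{mnkl}$, $(\mathbf{H}:\mathbf{a})_{ij}=H_{ijkl}a_{kl}$, $(\operatorname{tr}_{13}\mathbf{A})_{ij}=A_{kikj}$, $\mathbf{d}_2=\operatorname{tr}_{13}(\mathbf{H}:\mathbf{H})$, $\mathbf{c}_3=\mathbf{H}:\mathbf{d}_2$. Symmetry group of a tensor: $\{g\in SO(3):g\star\mathbf{T}=\mathbf{T}\}$; of a family or subspace: intersection of members' groups; symmetry class: its conjugacy class. Transversely isotropic $=[O(2)]$, tetragonal $=[\mathbb{D}_4]$, trigonal $=[\mathbb{D}_3]$, where $O(2)$ is generated by rotations about the $z$-axis and the rotation by $\pi$ about the $x$-axis, and $\mathbb{D}_n$ is generated by the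 rotation by $2\pi/n$ about the $z$-axis and the rotation by $\pi$ about the $x$-axis. *)

theory Defs
  imports "HOL-Analysis.Analysis"
begin

text \<open>Tensors on R^3, given by their components in the standard basis.
  Index type 3 (numeral type); the coordinate axes x, y, z correspond to indices 1, 2, 3.\<close>

type_synonym tensor2 = "3 \<Rightarrow> 3 \<Rightarrow> real"
type_synonym tensor4 = "3 \<Rightarrow> 3 \<Rightarrow> 3 \<Rightarrow> 3 \<Rightarrow> real"
type_synonym mat3 = "real^3^3"

definition SO3 :: "mat3 set" where
  "SO3 = {g. orthogonal_matrix g \<and> det g = 1}"

definition totally_symmetric4 :: "tensor4 \<Rightarrow> bool" where
  "totally_symmetric4 T \<longleftrightarrow>
     (\<forall>i j k l. T i j k l = T j i k l \<and> T i j k l = T i k j l \<and> T i j k l = T i j l k)"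

definition H4 :: "tensor4 set" where
  "H4 = {T. totally_symmetric4 T \<and> (\<forall>k l. (\<Sum>i\<in>UNIV. T i i k l) = 0)}"

definition Sym2 :: "tensor2 set" where
  "Sym2 = {a. \<forall>i j. a i j = a j i}"

text \<open>The SO(3) action (g * T)(x1,..,xn) = T(g^-1 x1, .., g^-1 xn), in components.\<close>
definition act2 :: "mat3 \<Rightarrow> tensor2 \<Rightarrow> tensor2" where
  "act2 g a = (\<lambda>i j. \<Sum>p\<in>UNIV. \<Sum>q\<in>UNIV. g$i$p * g$j$q * a p q)"

definition act4 :: "mat3 \<Rightarrow> tensor4 \<Rightarrow> tensor4" where
  "act4 g T = (\<lambda>i j k l. \<Sum>p\<in>UNIV. \<Sum>q\<in>UNIV. \<Sum>r\<in>UNIV. \<Sum>s\<in>UNIV.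
      g$i$p * g$j$q * g$k$r * g$l$s * T p q r s)"

inductive_set polyfun4 :: "(tensor4 \<Rightarrow> real) set" where
  const: "(\<lambda>T. c) \<in> polyfun4"
| coord: "(\<lambda>T. T i j k l) \<in> polyfun4"
| add: "f \<in> polyfun4 \<Longrightarrow> h \<in> polyfun4 \<Longrightarrow> (\<lambda>T. f T + h T) \<in> polyfun4"
| mult: "f \<in> polyfun4 \<Longrightarrow> h \<in> polyfun4 \<Longrightarrow> (\<lambda>T. f T * h T) \<in> polyfun4"

text \<open>SO(3)-equivariant polynomial maps H^4 \<rightarrow> Sym^2(R^3) (only their values on H^4 matter).\<close>
definition equivariant_poly_map :: "(tensor4 \<Rightarrow> tensor2) \<Rightarrow> bool" where
  "equivariant_poly_map F \<longleftrightarrow>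
     (\<forall>i j. \<exists>p\<in>polyfun4. \<forall>T\<in>H4. F T i j = p T) \<and>
     (\<forall>T\<in>H4. F T \<in> Sym2) \<and>
     (\<forall>g\<in>SO3. \<forall>T\<in>H4. F (act4 g T) = act2 g (F T))"

definition Cov2 :: "tensor4 \<Rightarrow> tensor2 set" where
  "Cov2 H = {F H | F. equivariant_poly_map F}"

definition symgroup2 :: "tensor2 \<Rightarrow> mat3 set" where
  "symgroup2 a = {g\<in>SO3. act2 g a = a}"

definition symgroup4 :: "tensor4 \<Rightarrow> mat3 set" where
  "symgroup4 T = {g\<in>SO3. act4 g T = T}"

definition symgroup2_family :: "tensor2 set \<Rightarrow> mat3 set" where
  "symgroup2_family A = {g\<in>SO3. \<forall>a\<in>A. act2 g a = a}"

inductive_set gen_group :: "mat3 set \<Rightarrow> mat3 set" for S where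
  one: "mat 1 \<in> gen_group S"
| gen: "s \<in> S \<Longrightarrow> s \<in> gen_group S"
| mult: "a \<in> gen_group S \<Longrightarrow> b \<in> gen_group S \<Longrightarrow> a ** b \<in> gen_group S"
| inv: "a \<in> gen_group S \<Longrightarrow> matrix_inv a \<in> gen_group S"

definition rotz :: "real \<Rightarrow> mat3" where
  "rotz t = vector [vector [cos t, - sin t, 0], vector [sin t, cos t, 0], vector [0, 0, 1]]"

definition rotx :: "real \<Rightarrow> mat3" where
  "rotx t = vector [vector [1, 0, 0], vector [0, cos t, - sin t], vector [0, sin t, cos t]]"

definition O2 :: "mat3 set" where
  "O2 = gen_group (range rotz \<union> {rotx pi})"

definition Dn :: "nat \<Rightarrow> mat3 set" where
  "Dn n = gen_group {rotz (2 * pi / real n), rotx pi}"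

definition in_class :: "mat3 set \<Rightarrow> mat3 set \<Rightarrow> bool" where
  "in_class G K \<longleftrightarrow> (\<exists>g\<in>SO3. G = (\<lambda>k. g ** k ** matrix_inv g) ` K)"

definition dcontr44 :: "tensor4 \<Rightarrow> tensor4 \<Rightarrow> tensor4" where
  "dcontr44 A B = (\<lambda>i j k l. \<Sum>m\<in>UNIV. \<Sum>n\<in>UNIV. A i j m n * B m n k l)"

definition dcontr42 :: "tensor4 \<Rightarrow> tensor2 \<Rightarrow> tensor2" where
  "dcontr42 A a = (\<lambda>i j. \<Sum>k\<in>UNIV. \<Sum>l\<in>UNIV. A i j k l * a k l)"

definition tr13 :: "tensor4 \<Rightarrow> tensor2" where
  "tr13 A = (\<lambda>i j. \<Sum>k\<in>UNIV. A k i k j)"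

definition d2 :: "tensor4 \<Rightarrow> tensor2" where
  "d2 H = tr13 (dcontr44 H H)"

definition c3 :: "tensor4 \<Rightarrow> tensor2" where
  "c3 H = dcontr42 H (d2 H)"

end

theory Submission
  imports Defs
begin

lemma sum3: "sum f (UNIV::3 set) = f 1 + f 2 + f 3" by (rule sum_3)

definition conj :: "mat3 \<Rightarrow> mat3 \<Rightarrow> mat3" where
  "conj g k = g ** k ** matrix_inv g"

lemma SO3_orth: "g \<in> SO3 \<Longrightarrow> transpose g ** g = mat 1 \<and> g ** transpose g = mat 1"
  by (simp add: SO3_def orthogonal_matrix_def)

lemma matrix_inv_orth:
  fixes g :: mat3
  assumes "transpose g ** g = mat 1" "g ** transpose g = (mat 1::mat3)"
  shows "matrix_inv g = transpose g"
proof -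
  have ex: "\<exists>A'::mat3. g ** A' = mat 1 \<and> A' ** g = mat 1" using assms by blast
  let ?A = "matrix_inv g"
  have h: "g ** ?A = mat 1 \<and> ?A ** g = mat 1"
    unfolding matrix_inv_def by (rule someI_ex[OF ex])
  have "transpose g = transpose g ** (g ** ?A)" using h by simp
  also have "\<dots> = ?A" using assms(1) by (simp add: matrix_mul_assoc)
  finally show ?thesis by simp
qed

lemma SO3_inv: "g \<in> SO3 \<Longrightarrow> matrix_inv g = transpose g"
  using SO3_orth matrix_inv_orth by blast

lemma SO3_mult: "g \<in> SO3 \<Longrightarrow> h \<in> SO3 \<Longrightarrow> g ** h \<in> SO3"
  by (simp add: SO3_def orthogonal_matrix_mul det_mul)

lemma SO3_transpose: "g \<in> SO3 \<Longrightarrow> transpose g \<in> SO3"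
  by (simp add: SO3_def)

lemma SO3_one: "mat 1 \<in> SO3"
  by (simp add: SO3_def orthogonal_matrix_id)

lemma orth_sum1:
  fixes g :: mat3
  assumes "transpose g ** g = (mat 1::mat3)"
  shows "(\<Sum>i\<in>UNIV. g$i$p * g$i$q) = (if p = q then 1 else 0)"
proof -
  have "(transpose g ** g)$p$q = (mat 1::mat3)$p$q" using assms by simp
  then show ?thesis by (simp add: matrix_matrix_mult_def transpose_def mat_def)
qed

lemma orth_sum2:
  fixes g :: mat3
  assumes "g ** transpose g = (mat 1::mat3)"
  shows "(\<Sum>i\<in>UNIV. g$p$i * g$q$i) = (if p = q then 1 else 0)"
proof -
  have "(g ** transpose g)$p$q = (mat 1::mat3)$p$q" using assms by simp
  then show ?thesis by (simp add: matrix_matrix_mult_def transpose_def mat_def)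
qed

definition s1 :: "mat3 \<Rightarrow> tensor4 \<Rightarrow> tensor4" where
  "s1 g T = (\<lambda>i j k l. \<Sum>p\<in>UNIV. g$i$p * T p j k l)"
definition s2 :: "mat3 \<Rightarrow> tensor4 \<Rightarrow> tensor4" where
  "s2 g T = (\<lambda>i j k l. \<Sum>p\<in>UNIV. g$j$p * T i p k l)"
definition s3 :: "mat3 \<Rightarrow> tensor4 \<Rightarrow> tensor4" where
  "s3 g T = (\<lambda>i j k l. \<Sum>p\<in>UNIV. g$k$p * T i j p l)"
definition s4 :: "mat3 \<Rightarrow> tensor4 \<Rightarrow> tensor4" where
  "s4 g T = (\<lambda>i j k l. \<Sum>p\<in>UNIV. g$l$p * T i j k p)"
definition u1 :: "mat3 \<Rightarrow> tensor2 \<Rightarrow> tensor2" where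
  "u1 g a = (\<lambda>i j. \<Sum>p\<in>UNIV. g$i$p * a p j)"
definition u2 :: "mat3 \<Rightarrow> tensor2 \<Rightarrow> tensor2" where
  "u2 g a = (\<lambda>i j. \<Sum>p\<in>UNIV. g$j$p * a i p)"

lemma act4_slots: "act4 g T = s1 g (s2 g (s3 g (s4 g T)))"
  by (simp add: act4_def s1_def s2_def s3_def s4_def sum_distrib_left mult.assoc)

lemma act2_slots: "act2 g a = u1 g (u2 g a)"
  by (simp add: act2_def u1_def u2_def sum_distrib_left mult.assoc)

lemmas slot_defs = s1_def s2_def s3_def s4_def u1_def u2_def

lemma s12: "s1 g (s2 h T) = s2 h (s1 g T)" by (rule ext)+ (simp add: slot_defs sum3 algebra_simps)
lemma s13: "s1 g (s3 h T) = s3 h (s1 g T)" by (rule ext)+ (simp add: slot_defs sum3 algebra_simps)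
lemma s14: "s1 g (s4 h T) = s4 h (s1 g T)" by (rule ext)+ (simp add: slot_defs sum3 algebra_simps)
lemma s23: "s2 g (s3 h T) = s3 h (s2 g T)" by (rule ext)+ (simp add: slot_defs sum3 algebra_simps)
lemma s24: "s2 g (s4 h T) = s4 h (s2 g T)" by (rule ext)+ (simp add: slot_defs sum3 algebra_simps)
lemma s34: "s3 g (s4 h T) = s4 h (s3 g T)" by (rule ext)+ (simp add: slot_defs sum3 algebra_simps)
lemma u12: "u1 g (u2 h a) = u2 h (u1 g a)" by (rule ext)+ (simp add: slot_defs sum3 algebra_simps)

lemma s1m: "s1 (g ** h) T = s1 g (s1 h T)" by (rule ext)+ (simp add: slot_defs matrix_matrix_mult_def sum3 algebra_simps)
lemma s2m: "s2 (g ** h) T = s2 g (s2 h T)" by (rule ext)+ (simp add: slot_defs matrix_matrix_mult_def sum3 algebra_simps)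
lemma s3m: "s3 (g ** h) T = s3 g (s3 h T)" by (rule ext)+ (simp add: slot_defs matrix_matrix_mult_def sum3 algebra_simps)
lemma s4m: "s4 (g ** h) T = s4 g (s4 h T)" by (rule ext)+ (simp add: slot_defs matrix_matrix_mult_def sum3 algebra_simps)
lemma u1m: "u1 (g ** h) a = u1 g (u1 h a)" by (rule ext)+ (simp add: slot_defs matrix_matrix_mult_def sum3 algebra_simps)
lemma u2m: "u2 (g ** h) a = u2 g (u2 h a)" by (rule ext)+ (simp add: slot_defs matrix_matrix_mult_def sum3 algebra_simps)

lemma act4_mult: "act4 (g ** h) T = act4 g (act4 h T)"
proof -
  have "act4 (g ** h) T = s1 g (s1 h (s2 g (s2 h (s3 g (s3 h (s4 g (s4 h T)))))))"
    by (simp add: act4_slots s1m s2m s3m s4m)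
  also have "\<dots> = s1 g (s2 g (s3 g (s4 g (s1 h (s2 h (s3 h (s4 h T)))))))"
    by (simp only: s12 s13 s14 s23 s24 s34)
  finally show ?thesis by (simp add: act4_slots)
qed

lemma act2_mult: "act2 (g ** h) a = act2 g (act2 h a)"
  by (simp add: act2_slots u1m u2m u12)

lemma act4_one: "act4 (mat 1) T = T"
proof -
  have "\<forall>i j k l. act4 (mat 1) T i j k l = T i j k l"
    by (simp add: forall_3 act4_def mat_def sum3)
  then show ?thesis by blast
qed

lemma act2_one: "act2 (mat 1) a = a"
proof -
  have "\<forall>i j. act2 (mat 1) a i j = a i j"
    by (simp add: forall_3 act2_def mat_def sum3)
  then show ?thesis by blast
qed

lemma orth_contr:
  fixes g :: mat3
  assumes "transpose g ** g = mat 1"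
  shows "(\<Sum>k\<in>UNIV. (\<Sum>p\<in>UNIV. g$k$p * X p) * (\<Sum>r\<in>UNIV. g$k$r * Y r)) = (\<Sum>p\<in>UNIV. X p * Y p)"
proof -
  have "(\<Sum>k\<in>UNIV. (\<Sum>p\<in>UNIV. g$k$p * X p) * (\<Sum>r\<in>UNIV. g$k$r * Y r))
     = (\<Sum>p\<in>UNIV. \<Sum>r\<in>UNIV. (\<Sum>k\<in>UNIV. g$k$p * g$k$r) * (X p * Y r))"
    by (simp add: sum3 algebra_simps)
  also have "\<dots> = (\<Sum>p\<in>UNIV. \<Sum>r\<in>UNIV. (if p = r then 1 else 0) * (X p * Y r))"
    by (simp only: orth_sum1[OF assms])
  also have "\<dots> = (\<Sum>p\<in>UNIV. X p * Y p)"
    by (simp add: sum3)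
  finally show ?thesis .
qed

lemma orth_contr2:
  fixes g :: mat3
  assumes "transpose g ** g = mat 1"
  shows "(\<Sum>k\<in>UNIV. (\<Sum>p\<in>UNIV. g$k$p * (\<Sum>r\<in>UNIV. g$k$r * Y p r))) = (\<Sum>p\<in>UNIV. Y p p)"
proof -
  have "(\<Sum>k\<in>UNIV. (\<Sum>p\<in>UNIV. g$k$p * (\<Sum>r\<in>UNIV. g$k$r * Y p r)))
     = (\<Sum>p\<in>UNIV. \<Sum>r\<in>UNIV. (\<Sum>k\<in>UNIV. g$k$p * g$k$r) * Y p r)"
    by (simp add: sum3 algebra_simps)
  also have "\<dots> = (\<Sum>p\<in>UNIV. \<Sum>r\<in>UNIV. (if p = r then 1 else 0) * Y p r)"
    by (simp only: orth_sum1[OF assms])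
  also have "\<dots> = (\<Sum>p\<in>UNIV. Y p p)"
    by (simp add: sum3)
  finally show ?thesis .
qed

lemma dc44_s1: "dcontr44 (s1 g X) Y = s1 g (dcontr44 X Y)"
  by (rule ext)+ (simp add: dcontr44_def slot_defs sum3 algebra_simps)
lemma dc44_s2: "dcontr44 (s2 g X) Y = s2 g (dcontr44 X Y)"
  by (rule ext)+ (simp add: dcontr44_def slot_defs sum3 algebra_simps)
lemma dc44_s3: "dcontr44 X (s3 g Y) = s3 g (dcontr44 X Y)"
  by (rule ext)+ (simp add: dcontr44_def slot_defs sum3 algebra_simps)
lemma dc44_s4: "dcontr44 X (s4 g Y) = s4 g (dcontr44 X Y)"
  by (rule ext)+ (simp add: dcontr44_def slot_defs sum3 algebra_simps)

lemma dc44_c1: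
  assumes "transpose g ** g = mat 1"
  shows "dcontr44 (s3 g X) (s1 g Y) = dcontr44 X Y"
proof (rule ext)+
  fix i j k l
  have "dcontr44 (s3 g X) (s1 g Y) i j k l =
     (\<Sum>n\<in>UNIV. \<Sum>m\<in>UNIV. (\<Sum>p\<in>UNIV. g$m$p * X i j p n) * (\<Sum>r\<in>UNIV. g$m$r * Y r n k l))"
    unfolding dcontr44_def slot_defs by (rule sum.swap)
  also have "\<dots> = (\<Sum>n\<in>UNIV. \<Sum>p\<in>UNIV. X i j p n * Y p n k l)"
    by (simp only: orth_contr[OF assms])
  also have "\<dots> = dcontr44 X Y i j k l"
    unfolding dcontr44_def by (rule sum.swap)
  finally show "dcontr44 (s3 g X) (s1 g Y) i j k l = dcontr44 X Y i j k l" .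
qed

lemma dc44_c2:
  assumes "transpose g ** g = mat 1"
  shows "dcontr44 (s4 g X) (s2 g Y) = dcontr44 X Y"
proof (rule ext)+
  fix i j k l
  have "dcontr44 (s4 g X) (s2 g Y) i j k l =
     (\<Sum>m\<in>UNIV. \<Sum>n\<in>UNIV. (\<Sum>p\<in>UNIV. g$n$p * X i j m p) * (\<Sum>r\<in>UNIV. g$n$r * Y m r k l))"
    unfolding dcontr44_def slot_defs by (rule refl)
  also have "\<dots> = (\<Sum>m\<in>UNIV. \<Sum>p\<in>UNIV. X i j m p * Y m p k l)"
    by (simp only: orth_contr[OF assms])
  also have "\<dots> = dcontr44 X Y i j k l"
    by (simp add: dcontr44_def)
  finally show "dcontr44 (s4 g X) (s2 g Y) i j k l = dcontr44 X Y i j k l" .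
qed

lemma dcontr44_equiv:
  assumes "transpose g ** g = mat 1"
  shows "dcontr44 (act4 g A) (act4 g B) = act4 g (dcontr44 A B)"
proof -
  have B: "act4 g B = s3 g (s4 g (s1 g (s2 g B)))"
    by (simp only: act4_slots s12 s13 s14 s23 s24 s34)
  have "dcontr44 (act4 g A) (act4 g B) = s1 g (s2 g (s3 g (s4 g (dcontr44 (s3 g (s4 g A)) (s1 g (s2 g B))))))"
    apply (subst B)
    apply (subst act4_slots)
    apply (simp only: dc44_s1 dc44_s2 dc44_s3 dc44_s4)
    by (simp only: s13[symmetric] s14[symmetric] s23[symmetric] s24[symmetric])
  also have "dcontr44 (s3 g (s4 g A)) (s1 g (s2 g B)) = dcontr44 A B"
    by (simp only: dc44_c1[OF assms] dc44_c2[OF assms])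
  finally show ?thesis
    by (simp only: act4_slots s13[symmetric] s14[symmetric] s23[symmetric] s24[symmetric])
qed

lemma tr13_s2: "tr13 (s2 g X) = u1 g (tr13 X)"
  by (rule ext)+ (simp add: tr13_def slot_defs sum3 algebra_simps)
lemma tr13_s4: "tr13 (s4 g X) = u2 g (tr13 X)"
  by (rule ext)+ (simp add: tr13_def slot_defs sum3 algebra_simps)
lemma tr13_c:
  assumes "transpose g ** g = mat 1"
  shows "tr13 (s1 g (s3 g X)) = tr13 X"
proof (rule ext)+
  fix i j
  have "tr13 (s1 g (s3 g X)) i j = (\<Sum>k\<in>UNIV. (\<Sum>p\<in>UNIV. g$k$p * (\<Sum>r\<in>UNIV. g$k$r * X p i r j)))"
    by (simp add: tr13_def slot_defs)
  also have "\<dots> = (\<Sum>p\<in>UNIV. X p i p j)"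
    by (rule orth_contr2[OF assms])
  finally show "tr13 (s1 g (s3 g X)) i j = tr13 X i j" by (simp add: tr13_def)
qed

lemma tr13_equiv:
  assumes "transpose g ** g = mat 1"
  shows "tr13 (act4 g A) = act2 g (tr13 A)"
proof -
  have "act4 g A = s2 g (s4 g (s1 g (s3 g A)))"
    by (simp only: act4_slots s12 s13 s14 s23 s24 s34)
  then show ?thesis
    by (simp add: tr13_s2 tr13_s4 tr13_c[OF assms] act2_slots)
qed

lemma d2_equiv:
  assumes "transpose g ** g = mat 1"
  shows "d2 (act4 g A) = act2 g (d2 A)"
  by (simp add: d2_def dcontr44_equiv[OF assms] tr13_equiv[OF assms])

lemma dc42_s1: "dcontr42 (s1 g X) a = u1 g (dcontr42 X a)"
  by (rule ext)+ (simp add: dcontr42_def slot_defs sum3 algebra_simps)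
lemma dc42_s2: "dcontr42 (s2 g X) a = u2 g (dcontr42 X a)"
  by (rule ext)+ (simp add: dcontr42_def slot_defs sum3 algebra_simps)
lemma dc42_c1:
  assumes "transpose g ** g = mat 1"
  shows "dcontr42 (s3 g X) (u1 g a) = dcontr42 X a"
proof (rule ext)+
  fix i j
  have "dcontr42 (s3 g X) (u1 g a) i j =
     (\<Sum>l\<in>UNIV. \<Sum>k\<in>UNIV. (\<Sum>p\<in>UNIV. g$k$p * X i j p l) * (\<Sum>r\<in>UNIV. g$k$r * a r l))"
    unfolding dcontr42_def slot_defs by (rule sum.swap)
  also have "\<dots> = (\<Sum>l\<in>UNIV. \<Sum>p\<in>UNIV. X i j p l * a p l)"
    by (simp only: orth_contr[OF assms])
  also have "\<dots> = dcontr42 X a i j"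
    unfolding dcontr42_def by (rule sum.swap)
  finally show "dcontr42 (s3 g X) (u1 g a) i j = dcontr42 X a i j" .
qed
lemma dc42_c2:
  assumes "transpose g ** g = mat 1"
  shows "dcontr42 (s4 g X) (u2 g a) = dcontr42 X a"
proof (rule ext)+
  fix i j
  have "dcontr42 (s4 g X) (u2 g a) i j =
     (\<Sum>k\<in>UNIV. \<Sum>l\<in>UNIV. (\<Sum>p\<in>UNIV. g$l$p * X i j k p) * (\<Sum>r\<in>UNIV. g$l$r * a k r))"
    unfolding dcontr42_def slot_defs by (rule refl)
  also have "\<dots> = (\<Sum>k\<in>UNIV. \<Sum>p\<in>UNIV. X i j k p * a k p)"
    by (simp only: orth_contr[OF assms])
  finally show "dcontr42 (s4 g X) (u2 g a) i j = dcontr42 X a i j"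
    by (simp add: dcontr42_def)
qed

lemma dcontr42_equiv:
  assumes "transpose g ** g = mat 1"
  shows "dcontr42 (act4 g A) (act2 g a) = act2 g (dcontr42 A a)"
proof -
  have "dcontr42 (act4 g A) (act2 g a) = u1 g (u2 g (dcontr42 (s3 g (s4 g A)) (u1 g (u2 g a))))"
    by (simp only: act4_slots act2_slots dc42_s1 dc42_s2)
  also have "dcontr42 (s3 g (s4 g A)) (u1 g (u2 g a)) = dcontr42 A a"
    by (simp only: dc42_c1[OF assms] dc42_c2[OF assms])
  finally show ?thesis by (simp add: act2_slots)
qed

lemma c3_equiv:
  assumes "transpose g ** g = mat 1"
  shows "c3 (act4 g A) = act2 g (c3 A)"
  by (simp add: c3_def d2_equiv[OF assms] dcontr42_equiv[OF assms])

lemma act4_sym12: "act4 g T j i k l = act4 g (\<lambda>i j k l. T j i k l) i j k l"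
  unfolding act4_def by (subst sum.swap) (simp add: mult_ac)

lemma act4_sym23: "act4 g T i k j l = act4 g (\<lambda>i j k l. T i k j l) i j k l"
  unfolding act4_def
  by (rule sum.cong[OF refl], subst sum.swap) (simp add: mult_ac)

lemma act4_sym34: "act4 g T i j l k = act4 g (\<lambda>i j k l. T i j l k) i j k l"
  unfolding act4_def
  by (rule sum.cong[OF refl], rule sum.cong[OF refl], subst sum.swap) (simp add: mult_ac)

lemma tsym_act4:
  assumes "totally_symmetric4 T"
  shows "totally_symmetric4 (act4 g T)"
proof -
  have e1: "(\<lambda>i j k l. T j i k l) = T" "(\<lambda>i j k l. T i k j l) = T" "(\<lambda>i j k l. T i j l k) = T"
    using assms unfolding totally_symmetric4_def by (auto intro!: ext)
  have "act4 g T i j k l = act4 g T j i k l \<and> act4 g T i j k l = act4 g T i k j l \<and> act4 g T i j k l = act4 g T i j l k" for i j k l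
  proof -
    have 1: "act4 g T j i k l = act4 g T i j k l"
      using act4_sym12[of g T j i k l] by (simp only: e1)
    have 2: "act4 g T i k j l = act4 g T i j k l"
      using act4_sym23[of g T i k j l] by (simp only: e1)
    have 3: "act4 g T i j l k = act4 g T i j k l"
      using act4_sym34[of g T i j l k] by (simp only: e1)
    show ?thesis using 1 2 3 by simp
  qed
  then show ?thesis unfolding totally_symmetric4_def by blast
qed

lemma trace_s34: "(\<Sum>i\<in>UNIV. s3 g (s4 g Z) i i k l) = (\<Sum>p\<in>UNIV. g$k$p * (\<Sum>q\<in>UNIV. g$l$q * (\<Sum>i\<in>UNIV. Z i i p q)))"
  by (simp add: slot_defs sum3 algebra_simps)

lemma trace_s12:
  assumes "transpose g ** g = mat 1"
  shows "(\<Sum>i\<in>UNIV. s1 g (s2 g Z) i i k l) = (\<Sum>i\<in>UNIV. Z i i k l)"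
proof -
  have "(\<Sum>i\<in>UNIV. s1 g (s2 g Z) i i k l) = (\<Sum>i\<in>UNIV. (\<Sum>p\<in>UNIV. g$i$p * (\<Sum>r\<in>UNIV. g$i$r * Z p r k l)))"
    by (simp add: slot_defs)
  also have "\<dots> = (\<Sum>i\<in>UNIV. Z i i k l)" by (rule orth_contr2[OF assms])
  finally show ?thesis .
qed

lemma H4_act4:
  assumes "transpose g ** g = mat 1" "T \<in> H4"
  shows "act4 g T \<in> H4"
proof -
  have ts: "totally_symmetric4 T" and tr: "\<And>k l. (\<Sum>i\<in>UNIV. T i i k l) = 0"
    using assms(2) by (auto simp: H4_def)
  have "act4 g T = s3 g (s4 g (s1 g (s2 g T)))"
    by (simp only: act4_slots s13 s14 s23 s24)
  then have "(\<Sum>i\<in>UNIV. act4 g T i i k l) = 0" for k l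
    by (simp only: trace_s34 trace_s12[OF assms(1)] tr) simp
  then show ?thesis using tsym_act4[OF ts] by (simp add: H4_def)
qed

lemma Sym2_act2:
  assumes "a \<in> Sym2"
  shows "act2 g a \<in> Sym2"
  using assms unfolding Sym2_def act2_def
  by (auto simp: sum3 algebra_simps)

lemma act4_inv:
  assumes "g \<in> SO3"
  shows "act4 (transpose g) (act4 g T) = T" "act4 g (act4 (transpose g) T) = T"
  using SO3_orth[OF assms] by (simp_all add: act4_mult[symmetric] act4_one)

lemma act2_inv:
  assumes "g \<in> SO3"
  shows "act2 (transpose g) (act2 g a) = a" "act2 g (act2 (transpose g) a) = a"
  using SO3_orth[OF assms] by (simp_all add: act2_mult[symmetric] act2_one)

definition groupish :: "mat3 set \<Rightarrow> bool" where
  "groupish G \<longleftrightarrow> mat 1 \<in> G \<and> (\<forall>a\<in>G. \<forall>b\<in>G. a ** b \<in> G) \<and> (\<forall>a\<in>G. matrix_inv a \<in> G)"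

lemma gen_group_sub:
  assumes "groupish G" "S \<subseteq> G"
  shows "gen_group S \<subseteq> G"
proof
  fix x assume "x \<in> gen_group S"
  then show "x \<in> G"
    by induct (use assms in \<open>auto simp: groupish_def\<close>)
qed

lemma gen_group_mono:
  assumes st: "S \<subseteq> T" shows "gen_group S \<subseteq> gen_group T"
proof
  fix x assume "x \<in> gen_group S"
  then show "x \<in> gen_group T" using st
    by (induct rule: gen_group.induct) (auto intro: gen_group.intros)
qed

lemma groupish_gen: "groupish (gen_group S)"
  by (auto simp: groupish_def intro: gen_group.intros)

lemma groupish_SO3: "groupish SO3"
  by (auto simp: groupish_def SO3_one SO3_mult SO3_inv SO3_transpose)

lemma groupish_sym4: "groupish (symgroup4 T)"
  unfolding groupish_def symgroup4_def
  by (auto simp: SO3_one SO3_mult SO3_inv SO3_transpose act4_one act4_mult)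
     (metis act4_inv(1))

lemma groupish_fam: "groupish (symgroup2_family A)"
  unfolding groupish_def symgroup2_family_def
  by (auto simp: SO3_one SO3_mult SO3_inv SO3_transpose act2_one act2_mult)
     (metis act2_inv(1))

lemma groupish_sym2: "groupish (symgroup2 a)"
  unfolding groupish_def symgroup2_def
  by (auto simp: SO3_one SO3_mult SO3_inv SO3_transpose act2_one act2_mult)
     (metis act2_inv(1))

lemma mm_cancel:
  assumes "g \<in> SO3"
  shows "m ** g ** transpose g = m" "m ** transpose g ** g = m"
  using SO3_orth[OF assms] by (simp_all add: matrix_mul_assoc[symmetric])

lemma conj_SO3: "g \<in> SO3 \<Longrightarrow> conj g k = g ** k ** transpose g"
  by (simp add: conj_def SO3_inv)

lemma conj_conj: "g \<in> SO3 \<Longrightarrow> h \<in> SO3 \<Longrightarrow> conj g (conj h k) = conj (g ** h) k"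
  by (simp add: conj_SO3 SO3_mult matrix_transpose_mul matrix_mul_assoc)

lemma conj_back: "g \<in> SO3 \<Longrightarrow> conj (transpose g) (conj g k) = k"
  using SO3_orth[of g]
  by (simp add: conj_SO3 SO3_transpose matrix_mul_assoc mm_cancel)

lemma conj_one: "conj (mat 1) k = k"
  using conj_SO3[OF SO3_one] by simp

lemma conj_img_back: "g \<in> SO3 \<Longrightarrow> conj (transpose g) ` conj g ` G = G"
  by (force simp: image_image conj_back)

lemma sym4_transport:
  assumes "g \<in> SO3"
  shows "symgroup4 (act4 g H) = conj g ` symgroup4 H"
proof
  have o: "transpose g ** g = mat 1" "g ** transpose g = mat 1" using SO3_orth[OF assms] by auto
  show "conj g ` symgroup4 H \<subseteq> symgroup4 (act4 g H)"
  proof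
    fix m assume "m \<in> conj g ` symgroup4 H"
    then obtain k where k: "k \<in> SO3" "act4 k H = H" "m = g ** k ** transpose g"
      by (auto simp: symgroup4_def conj_SO3[OF assms])
    have "m \<in> SO3" using k assms by (simp add: SO3_mult SO3_transpose)
    moreover have "act4 m (act4 g H) = act4 g H"
      using k act4_inv[OF assms] by (simp add: act4_mult)
    ultimately show "m \<in> symgroup4 (act4 g H)" by (simp add: symgroup4_def)
  qed
  show "symgroup4 (act4 g H) \<subseteq> conj g ` symgroup4 H"
  proof
    fix m assume m: "m \<in> symgroup4 (act4 g H)"
    let ?k = "transpose g ** m ** g"
    have "?k \<in> SO3" using m assms by (simp add: symgroup4_def SO3_mult SO3_transpose)
    moreover have "act4 ?k H = H"
    proof -
      have "act4 ?k H = act4 (transpose g) (act4 m (act4 g H))" by (simp add: act4_mult)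
      also have "\<dots> = H" using m act4_inv[OF assms] by (simp add: symgroup4_def)
      finally show ?thesis .
    qed
    ultimately have "?k \<in> symgroup4 H" by (simp add: symgroup4_def)
    moreover have "m = conj g ?k"
      using o by (simp add: conj_SO3[OF assms] matrix_mul_assoc mm_cancel[OF assms])
    ultimately show "m \<in> conj g ` symgroup4 H" by (rule rev_image_eqI)
  qed
qed

lemma fam_transport:
  assumes "g \<in> SO3"
  shows "symgroup2_family (act2 g ` A) = conj g ` symgroup2_family A"
proof
  have o: "transpose g ** g = mat 1" "g ** transpose g = mat 1" using SO3_orth[OF assms] by auto
  show "conj g ` symgroup2_family A \<subseteq> symgroup2_family (act2 g ` A)"
  proof
    fix m assume "m \<in> conj g ` symgroup2_family A"
    then obtain k where k: "k \<in> SO3" "\<forall>a\<in>A. act2 k a = a" "m = g ** k ** transpose g"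
      by (auto simp: symgroup2_family_def conj_SO3[OF assms])
    have "m \<in> SO3" using k assms by (simp add: SO3_mult SO3_transpose)
    moreover have "act2 m (act2 g a) = act2 g a" if "a \<in> A" for a
      using k act2_inv[OF assms] that by (simp add: act2_mult)
    ultimately show "m \<in> symgroup2_family (act2 g ` A)" by (simp add: symgroup2_family_def)
  qed
  show "symgroup2_family (act2 g ` A) \<subseteq> conj g ` symgroup2_family A"
  proof
    fix m assume m: "m \<in> symgroup2_family (act2 g ` A)"
    let ?k = "transpose g ** m ** g"
    have "?k \<in> SO3" using m assms by (simp add: symgroup2_family_def SO3_mult SO3_transpose)
    moreover have "act2 ?k a = a" if "a \<in> A" for a
    proof -
      have "act2 ?k a = act2 (transpose g) (act2 m (act2 g a))" by (simp add: act2_mult)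
      also have "\<dots> = a" using m act2_inv[OF assms] that by (simp add: symgroup2_family_def)
      finally show ?thesis .
    qed
    ultimately have "?k \<in> symgroup2_family A" by (simp add: symgroup2_family_def)
    moreover have "m = conj g ?k"
      using o by (simp add: conj_SO3[OF assms] matrix_mul_assoc mm_cancel[OF assms])
    ultimately show "m \<in> conj g ` symgroup2_family A" by (rule rev_image_eqI)
  qed
qed

lemma in_class_conj: "in_class G K \<longleftrightarrow> (\<exists>g\<in>SO3. G = conj g ` K)"
  unfolding in_class_def conj_def by (rule refl)

lemma img_conj_conj: "g \<in> SO3 \<Longrightarrow> h \<in> SO3 \<Longrightarrow> conj g ` conj h ` K = conj (g ** h) ` K"
  by (simp add: image_image conj_conj)

lemma in_class_transport:
  assumes "g \<in> SO3"
  shows "in_class (conj g ` G) K \<longleftrightarrow> in_class G K"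
proof
  assume "in_class (conj g ` G) K"
  then obtain h where h: "h \<in> SO3" "conj g ` G = conj h ` K"
    by (auto simp: in_class_conj)
  have "G = conj (transpose g) ` conj g ` G" by (simp add: conj_img_back[OF assms])
  also have "\<dots> = conj (transpose g) ` conj h ` K" using h(2) by simp
  also have "\<dots> = conj (transpose g ** h) ` K"
    using h(1) assms SO3_transpose img_conj_conj by blast
  finally show "in_class G K"
    unfolding in_class_conj using h assms SO3_mult SO3_transpose by blast
next
  assume "in_class G K"
  then obtain h where h: "h \<in> SO3" "G = conj h ` K"
    by (auto simp: in_class_conj)
  then have "conj g ` G = conj (g ** h) ` K"
    using img_conj_conj assms by blast
  then show "in_class (conj g ` G) K"
    unfolding in_class_conj using h assms SO3_mult by blast
qed

lemma Cov2_transport: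
  assumes "g \<in> SO3" "H \<in> H4"
  shows "Cov2 (act4 g H) = act2 g ` Cov2 H"
proof -
  have "F (act4 g H) = act2 g (F H)" if "equivariant_poly_map F" for F
    using that assms unfolding equivariant_poly_map_def by auto
  then show ?thesis unfolding Cov2_def by (auto simp: image_iff) (metis)
qed

lemma d2c3_transport:
  assumes "g \<in> SO3"
  shows "{d2 (act4 g H), c3 (act4 g H)} = act2 g ` {d2 H, c3 H}"
  using SO3_orth[OF assms] by (simp add: d2_equiv c3_equiv)

lemma mat3_eq: "(A::mat3) = B \<longleftrightarrow>
  A$1$1 = B$1$1 \<and> A$1$2 = B$1$2 \<and> A$1$3 = B$1$3 \<and>
  A$2$1 = B$2$1 \<and> A$2$2 = B$2$2 \<and> A$2$3 = B$2$3 \<and>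
  A$3$1 = B$3$1 \<and> A$3$2 = B$3$2 \<and> A$3$3 = B$3$3"
  by (simp add: vec_eq_iff forall_3)

lemma mmult_nth: "((A::mat3) ** B)$i$j = A$i$1 * B$1$j + A$i$2 * B$2$j + A$i$3 * B$3$j"
  by (simp add: matrix_matrix_mult_def sum3)

lemma rotz_nth [simp]:
  "rotz t$1$1 = cos t" "rotz t$1$2 = - sin t" "rotz t$1$3 = 0"
  "rotz t$2$1 = sin t" "rotz t$2$2 = cos t" "rotz t$2$3 = 0"
  "rotz t$3$1 = 0" "rotz t$3$2 = 0" "rotz t$3$3 = 1"
  by (simp_all add: rotz_def)

lemma rotx_nth [simp]:
  "rotx t$1$1 = 1" "rotx t$1$2 = 0" "rotx t$1$3 = 0"
  "rotx t$2$1 = 0" "rotx t$2$2 = cos t" "rotx t$2$3 = - sin t"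
  "rotx t$3$1 = 0" "rotx t$3$2 = sin t" "rotx t$3$3 = cos t"
  by (simp_all add: rotx_def)

lemma mat1_nth [simp]:
  "(mat 1::mat3)$1$1 = 1" "(mat 1::mat3)$1$2 = 0" "(mat 1::mat3)$1$3 = 0"
  "(mat 1::mat3)$2$1 = 0" "(mat 1::mat3)$2$2 = 1" "(mat 1::mat3)$2$3 = 0"
  "(mat 1::mat3)$3$1 = 0" "(mat 1::mat3)$3$2 = 0" "(mat 1::mat3)$3$3 = 1"
  by (simp_all add: mat_def)

lemma transpose_nth3 [simp]: "(transpose (A::mat3))$i$j = A$j$i"
  by (simp add: transpose_def)

lemma rotz_add: "rotz a ** rotz b = rotz (a + b)"
  by (simp add: mat3_eq mmult_nth cos_add sin_add)

lemma rotz_zero: "rotz 0 = mat 1"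
  by (simp add: mat3_eq)

lemma rotz_transpose: "transpose (rotz a) = rotz (- a)"
  by (simp add: mat3_eq)

abbreviation X :: mat3 where "X \<equiv> rotx pi"

lemma XX: "X ** X = mat 1"
  by (simp add: mat3_eq mmult_nth)

lemma X_transpose: "transpose X = X"
  by (simp add: mat3_eq)

lemma X_rotz: "X ** rotz b = rotz (- b) ** X"
  by (simp add: mat3_eq mmult_nth)

lemma orth3_eqs:
  fixes g :: mat3
  assumes "transpose g ** g = mat 1" "g ** transpose g = mat 1"
  shows "g$1$1*g$1$1 + g$2$1*g$2$1 + g$3$1*g$3$1 = 1"
        "g$1$2*g$1$2 + g$2$2*g$2$2 + g$3$2*g$3$2 = 1"
        "g$1$3*g$1$3 + g$2$3*g$2$3 + g$3$3*g$3$3 = 1"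
        "g$1$1*g$1$2 + g$2$1*g$2$2 + g$3$1*g$3$2 = 0"
        "g$1$1*g$1$3 + g$2$1*g$2$3 + g$3$1*g$3$3 = 0"
        "g$1$2*g$1$3 + g$2$2*g$2$3 + g$3$2*g$3$3 = 0"
        "g$1$1*g$1$1 + g$1$2*g$1$2 + g$1$3*g$1$3 = 1"
        "g$2$1*g$2$1 + g$2$2*g$2$2 + g$2$3*g$2$3 = 1"
        "g$3$1*g$3$1 + g$3$2*g$3$2 + g$3$3*g$3$3 = 1"
        "g$1$1*g$2$1 + g$1$2*g$2$2 + g$1$3*g$2$3 = 0"
        "g$1$1*g$3$1 + g$1$2*g$3$2 + g$1$3*g$3$3 = 0"
        "g$2$1*g$3$1 + g$2$2*g$3$2 + g$2$3*g$3$3 = 0"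
  using orth_sum1[OF assms(1), of 1 1] orth_sum1[OF assms(1), of 2 2] orth_sum1[OF assms(1), of 3 3]
        orth_sum1[OF assms(1), of 1 2] orth_sum1[OF assms(1), of 1 3] orth_sum1[OF assms(1), of 2 3]
        orth_sum2[OF assms(2), of 1 1] orth_sum2[OF assms(2), of 2 2] orth_sum2[OF assms(2), of 3 3]
        orth_sum2[OF assms(2), of 1 2] orth_sum2[OF assms(2), of 1 3] orth_sum2[OF assms(2), of 2 3]
  by (simp_all add: sum3)

lemma SO3_I:
  fixes g :: mat3
  assumes "transpose g ** g = mat 1" "det g = 1"
  shows "g \<in> SO3"
  using assms by (simp add: SO3_def orthogonal_matrix)

lemma rotz_SO3: "rotz t \<in> SO3"
  by (rule SO3_I) (simp_all add: mat3_eq mmult_nth det_3 power2_eq_square[symmetric])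

lemma X_SO3: "X \<in> SO3"
  by (rule SO3_I) (simp_all add: mat3_eq mmult_nth det_3)

definition O2set :: "mat3 set" where
  "O2set = range rotz \<union> (\<lambda>t. rotz t ** X) ` UNIV"

lemma O2set_groupish: "groupish O2set"
proof -
  have inv_r: "matrix_inv (rotz t) = rotz (- t)" for t
    by (simp add: SO3_inv rotz_SO3 rotz_transpose)
  have inv_f: "matrix_inv (rotz t ** X) = rotz t ** X" for t
  proof -
    have "matrix_inv (rotz t ** X) = transpose X ** transpose (rotz t)"
      by (simp add: SO3_inv SO3_mult rotz_SO3 X_SO3 matrix_transpose_mul)
    also have "\<dots> = rotz t ** X" by (simp add: X_transpose rotz_transpose X_rotz)
    finally show ?thesis .
  qed
  have m1: "rotz a ** (rotz b ** X) = rotz (a + b) ** X" for a b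
    by (simp add: matrix_mul_assoc rotz_add)
  have m2: "(rotz a ** X) ** rotz b = rotz (a - b) ** X" for a b
    by (simp add: matrix_mul_assoc[symmetric] X_rotz) (simp add: matrix_mul_assoc rotz_add)
  have m3: "(rotz a ** X) ** (rotz b ** X) = rotz (a - b)" for a b
  proof -
    have "(rotz a ** X) ** (rotz b ** X) = ((rotz a ** X) ** rotz b) ** X" by (simp add: matrix_mul_assoc)
    also have "\<dots> = rotz (a - b) ** (X ** X)" by (simp add: m2 matrix_mul_assoc)
    finally show ?thesis by (simp add: XX)
  qed
  show ?thesis unfolding groupish_def O2set_def
    by (auto simp: rotz_zero[symmetric] rotz_add inv_r inv_f m1 m2 m3)
qed

lemma O2_eq: "O2 = O2set"
proof
  show "O2 \<subseteq> O2set" unfolding O2_def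
    by (rule gen_group_sub[OF O2set_groupish]) (auto simp: O2set_def intro: image_eqI[of _ _ 0] simp: rotz_zero)
  show "O2set \<subseteq> O2"
  proof
    fix g assume "g \<in> O2set"
    then show "g \<in> O2" unfolding O2set_def O2_def
      by (auto intro: gen_group.intros)
  qed
qed

lemma O2set_SO3: "O2set \<subseteq> SO3"
  unfolding O2set_def using rotz_SO3 X_SO3 SO3_mult by auto

lemma O2set_33: "g \<in> O2set \<Longrightarrow> g$3$3 = 1 \<or> g$3$3 = -1"
  unfolding O2set_def by (auto simp: mmult_nth)

lemma H4_sw:
  assumes "H \<in> H4"
  shows "H a b c d = H b a c d" "H a b c d = H a c b d" "H a b c d = H a b d c"
  using assms unfolding H4_def totally_symmetric4_def by blast+

lemma H4_tr0:
  assumes "H \<in> H4"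
  shows "H 1 1 k l + H 2 2 k l + H 3 3 k l = 0"
  using assms unfolding H4_def by (simp add: sum3)

lemma H4_tr:
  assumes "H \<in> H4"
  shows "H 1 1 3 3 = - (H 1 1 1 1 + H 1 1 2 2)"
        "H 2 2 3 3 = - (H 1 1 2 2 + H 2 2 2 2)"
        "H 3 3 3 3 = H 1 1 1 1 + 2 * H 1 1 2 2 + H 2 2 2 2"
        "H 1 2 3 3 = - (H 1 1 1 2 + H 1 2 2 2)"
        "H 1 3 3 3 = - (H 1 1 1 3 + H 1 2 2 3)"
        "H 2 3 3 3 = - (H 1 1 2 3 + H 2 2 2 3)"
proof -
  note sw = H4_sw[OF assms]
  have e: "H 1 1 1 1 + H 2 2 1 1 + H 3 3 1 1 = 0" "H 1 1 2 2 + H 2 2 2 2 + H 3 3 2 2 = 0"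
     "H 1 1 3 3 + H 2 2 3 3 + H 3 3 3 3 = 0" "H 1 1 1 2 + H 2 2 1 2 + H 3 3 1 2 = 0"
     "H 1 1 1 3 + H 2 2 1 3 + H 3 3 1 3 = 0" "H 1 1 2 3 + H 2 2 2 3 + H 3 3 2 3 = 0"
    using H4_tr0[OF assms] by auto
  have e2: "H 1 1 1 1 + H 1 1 2 2 + H 1 1 3 3 = 0" "H 1 1 2 2 + H 2 2 2 2 + H 2 2 3 3 = 0"
     "H 1 1 3 3 + H 2 2 3 3 + H 3 3 3 3 = 0" "H 1 1 1 2 + H 1 2 2 2 + H 1 2 3 3 = 0"
     "H 1 1 1 3 + H 1 2 2 3 + H 1 3 3 3 = 0" "H 1 1 2 3 + H 2 2 2 3 + H 2 3 3 3 = 0"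
    using e by (simp_all add: sw)
  then show "H 1 1 3 3 = - (H 1 1 1 1 + H 1 1 2 2)"
        "H 2 2 3 3 = - (H 1 1 2 2 + H 2 2 2 2)"
        "H 3 3 3 3 = H 1 1 1 1 + 2 * H 1 1 2 2 + H 2 2 2 2"
        "H 1 2 3 3 = - (H 1 1 1 2 + H 1 2 2 2)"
        "H 1 3 3 3 = - (H 1 1 1 3 + H 1 2 2 3)"
        "H 2 3 3 3 = - (H 1 1 2 3 + H 2 2 2 3)"
    by linarith+
qed

lemmas H4_simps = H4_sw H4_tr

lemma cos4: "cos (4 * (t::real)) = 8 * cos t ^ 4 - 8 * cos t ^ 2 + 1"
proof -
  have c2: "cos (2*t) = 2 * cos t ^ 2 - 1" by (rule cos_double_cos)
  have "cos (4 * t) = 2 * cos (2*t) ^ 2 - 1" using cos_double_cos[of "2*t"] by simp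
  then show ?thesis unfolding c2 by algebra
qed

lemma sin4: "sin (4 * (t::real)) = 4 * sin t * cos t * (2 * cos t ^ 2 - 1)"
proof -
  have c2: "cos (2*t) = 2 * cos t ^ 2 - 1" by (rule cos_double_cos)
  have s2: "sin (2*t) = 2 * sin t * cos t" by (rule sin_double)
  have "sin (4 * t) = 2 * sin (2*t) * cos (2*t)" using sin_double[of "2*t"] by simp
  then show ?thesis unfolding c2 s2 by algebra
qed

lemma cos3: "cos (3 * (t::real)) = 4 * cos t ^ 3 - 3 * cos t"
  by (rule cos_treble_cos)

lemma sin3: "sin (3 * (t::real)) = 3 * sin t - 4 * sin t ^ 3"
proof -
  have c2: "cos (2*t) = 1 - 2 * sin t ^ 2" by (rule cos_double_sin)
  have s2: "sin (2*t) = 2 * sin t * cos t" by (rule sin_double)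
  have sc: "sin t ^ 2 + cos t ^ 2 = 1" by simp
  have "sin (3 * t) = sin (2 * t + t)" by simp
  also have "\<dots> = sin (2*t) * cos t + cos (2*t) * sin t" by (rule sin_add)
  finally show ?thesis unfolding c2 s2 using sc by algebra
qed

definition core :: "tensor4 \<Rightarrow> bool" where
  "core H \<longleftrightarrow> H \<in> H4 \<and> H 2 2 2 2 = H 1 1 1 1 \<and> H 1 2 2 2 = - H 1 1 1 2
      \<and> H 1 2 2 3 = - H 1 1 1 3 \<and> H 2 2 2 3 = - H 1 1 2 3"

lemma core_simps:
  assumes "core H"
  shows "H 2 2 2 2 = H 1 1 1 1" "H 1 2 2 2 = - H 1 1 1 2" "H 1 2 2 3 = - H 1 1 1 3" "H 2 2 2 3 = - H 1 1 2 3"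
  using assms by (auto simp: core_def)

lemma H4_eq:
  assumes a: "A \<in> H4" and b: "B \<in> H4"
    and e: "A 1 1 1 1 = B 1 1 1 1" "A 1 1 1 2 = B 1 1 1 2" "A 1 1 2 2 = B 1 1 2 2"
      "A 1 2 2 2 = B 1 2 2 2" "A 2 2 2 2 = B 2 2 2 2" "A 1 1 1 3 = B 1 1 1 3"
      "A 1 1 2 3 = B 1 1 2 3" "A 1 2 2 3 = B 1 2 2 3" "A 2 2 2 3 = B 2 2 2 3"
  shows "A = B"
proof -
  have "\<forall>i j k l. A i j k l = B i j k l"
    by (simp add: forall_3 H4_simps[OF a] H4_simps[OF b] e)
  then show ?thesis by blast
qed

lemma core_eq:
  assumes a: "core A" and b: "core B"
    and e: "A 1 1 1 1 = B 1 1 1 1" "A 1 1 1 2 = B 1 1 1 2" "A 1 1 2 2 = B 1 1 2 2"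
      "A 1 1 1 3 = B 1 1 1 3" "A 1 1 2 3 = B 1 1 2 3"
  shows "A = B"
  using a b e by (intro H4_eq) (auto simp: core_def)

lemma rotz_orth: "transpose (rotz t) ** rotz t = mat 1"
  using SO3_orth[OF rotz_SO3] by simp

lemma X_orth: "transpose X ** X = mat 1"
  using SO3_orth[OF X_SO3] by simp

lemma rotz_core:
  assumes c: "core H"
  shows "core (act4 (rotz t) H)"
    "act4 (rotz t) H 1 1 1 1 = (3*(H 1 1 1 1 + H 1 1 2 2) + (H 1 1 1 1 - 3 * H 1 1 2 2) * cos (4*t) - 4 * H 1 1 1 2 * sin (4*t))/4"
    "act4 (rotz t) H 1 1 2 2 = ((H 1 1 1 1 + H 1 1 2 2) - (H 1 1 1 1 - 3 * H 1 1 2 2) * cos (4*t) + 4 * H 1 1 1 2 * sin (4*t))/4"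
    "act4 (rotz t) H 1 1 1 2 = H 1 1 1 2 * cos (4*t) + (H 1 1 1 1 - 3 * H 1 1 2 2) * sin (4*t) / 4"
    "act4 (rotz t) H 1 1 1 3 = H 1 1 1 3 * cos (3*t) - H 1 1 2 3 * sin (3*t)"
    "act4 (rotz t) H 1 1 2 3 = H 1 1 2 3 * cos (3*t) + H 1 1 1 3 * sin (3*t)"
proof -
  have h: "H \<in> H4" using c by (simp add: core_def)
  have sc: "sin t ^ 2 + cos t ^ 2 = 1" by simp
  note S = act4_def sum3 H4_simps[OF h] core_simps[OF c]
  have "act4 (rotz t) H 2 2 2 2 = act4 (rotz t) H 1 1 1 1"
    by (simp add: S; use sc in algebra)
  moreover have "act4 (rotz t) H 1 2 2 2 = - act4 (rotz t) H 1 1 1 2"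
    by (simp add: S; use sc in algebra)
  moreover have "act4 (rotz t) H 1 2 2 3 = - act4 (rotz t) H 1 1 1 3"
    by (simp add: S; use sc in algebra)
  moreover have "act4 (rotz t) H 2 2 2 3 = - act4 (rotz t) H 1 1 2 3"
    by (simp add: S; use sc in algebra)
  moreover have "act4 (rotz t) H \<in> H4" by (rule H4_act4[OF rotz_orth h])
  ultimately show "core (act4 (rotz t) H)" by (simp add: core_def)
  show "act4 (rotz t) H 1 1 1 1 = (3*(H 1 1 1 1 + H 1 1 2 2) + (H 1 1 1 1 - 3 * H 1 1 2 2) * cos (4*t) - 4 * H 1 1 1 2 * sin (4*t))/4"
    by (simp add: S cos4 sin4; use sc in algebra)
  show "act4 (rotz t) H 1 1 2 2 = ((H 1 1 1 1 + H 1 1 2 2) - (H 1 1 1 1 - 3 * H 1 1 2 2) * cos (4*t) + 4 * H 1 1 1 2 * sin (4*t))/4"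
    by (simp add: S cos4 sin4; use sc in algebra)
  show "act4 (rotz t) H 1 1 1 2 = H 1 1 1 2 * cos (4*t) + (H 1 1 1 1 - 3 * H 1 1 2 2) * sin (4*t) / 4"
    by (simp add: S cos4 sin4; use sc in algebra)
  show "act4 (rotz t) H 1 1 1 3 = H 1 1 1 3 * cos (3*t) - H 1 1 2 3 * sin (3*t)"
    by (simp add: S cos3 sin3; use sc in algebra)
  show "act4 (rotz t) H 1 1 2 3 = H 1 1 2 3 * cos (3*t) + H 1 1 1 3 * sin (3*t)"
    by (simp add: S cos3 sin3; use sc in algebra)
qed

lemma X_core:
  assumes c: "core H"
  shows "core (act4 X H)"
    "act4 X H 1 1 1 1 = H 1 1 1 1" "act4 X H 1 1 2 2 = H 1 1 2 2"
    "act4 X H 1 1 1 2 = - H 1 1 1 2" "act4 X H 1 1 1 3 = - H 1 1 1 3"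
    "act4 X H 1 1 2 3 = H 1 1 2 3"
proof -
  have h: "H \<in> H4" using c by (simp add: core_def)
  note S = act4_def sum3 H4_simps[OF h] core_simps[OF c]
  have "act4 X H 2 2 2 2 = act4 X H 1 1 1 1" "act4 X H 1 2 2 2 = - act4 X H 1 1 1 2"
    "act4 X H 1 2 2 3 = - act4 X H 1 1 1 3" "act4 X H 2 2 2 3 = - act4 X H 1 1 2 3"
    by (simp_all add: S)
  moreover have "act4 X H \<in> H4" by (rule H4_act4[OF X_orth h])
  ultimately show "core (act4 X H)" by (simp add: core_def)
  show "act4 X H 1 1 1 1 = H 1 1 1 1" "act4 X H 1 1 2 2 = H 1 1 2 2"
    "act4 X H 1 1 1 2 = - H 1 1 1 2" "act4 X H 1 1 1 3 = - H 1 1 1 3"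
    "act4 X H 1 1 2 3 = H 1 1 2 3"
    by (simp_all add: S)
qed

lemma d2_core:
  assumes c: "core H"
  shows "d2 H 1 3 = (H 1 1 1 1 - 3 * H 1 1 2 2) * H 1 1 1 3 + 4 * H 1 1 1 2 * H 1 1 2 3"
    "d2 H 2 3 = - (H 1 1 1 1 - 3 * H 1 1 2 2) * H 1 1 2 3 + 4 * H 1 1 1 2 * H 1 1 1 3"
    "d2 H 1 1 = 6 * H 1 1 1 1 * H 1 1 2 2 + 4 * H 1 1 1 1^2 + 4 * H 1 1 1 2^2 + 6 * H 1 1 2 2^2 + 6 * H 1 1 1 3^2 + 6 * H 1 1 2 3^2"
    "d2 H 3 3 = 20 * H 1 1 1 1 * H 1 1 2 2 + 10 * H 1 1 1 1^2 + 10 * H 1 1 2 2^2 + 4 * H 1 1 1 3^2 + 4 * H 1 1 2 3^2"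
proof -
  have h: "H \<in> H4" using c by (simp add: core_def)
  note S = d2_def tr13_def dcontr44_def sum3 H4_simps[OF h] core_simps[OF c]
  show "d2 H 1 3 = (H 1 1 1 1 - 3 * H 1 1 2 2) * H 1 1 1 3 + 4 * H 1 1 1 2 * H 1 1 2 3"
    by (simp add: S; algebra)
  show "d2 H 2 3 = - (H 1 1 1 1 - 3 * H 1 1 2 2) * H 1 1 2 3 + 4 * H 1 1 1 2 * H 1 1 1 3"
    by (simp add: S; algebra)
  show "d2 H 1 1 = 6 * H 1 1 1 1 * H 1 1 2 2 + 4 * H 1 1 1 1^2 + 4 * H 1 1 1 2^2 + 6 * H 1 1 2 2^2 + 6 * H 1 1 1 3^2 + 6 * H 1 1 2 3^2"
    by (simp add: S; algebra)
  show "d2 H 3 3 = 20 * H 1 1 1 1 * H 1 1 2 2 + 10 * H 1 1 1 1^2 + 10 * H 1 1 2 2^2 + 4 * H 1 1 1 3^2 + 4 * H 1 1 2 3^2"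
    by (simp add: S; algebra)
qed

definition uni :: "tensor2 \<Rightarrow> bool" where
  "uni M \<longleftrightarrow> M 1 2 = 0 \<and> M 2 1 = 0 \<and> M 1 3 = 0 \<and> M 3 1 = 0 \<and> M 2 3 = 0 \<and> M 3 2 = 0 \<and> M 2 2 = M 1 1"

lemma not_cos1:
  assumes "cos (of_int p * (2 * pi / of_int q)) = 1" "q > 0"
  shows "q dvd p"
proof -
  obtain n :: int where n: "of_int p * (2 * pi / of_int q) = of_int n * 2 * pi"
    using assms(1) cos_one_2pi_int by blast
  have "of_int p = (of_int n * of_int q :: real)"
    using n assms(2) pi_gt_zero by (simp add: field_simps)
  then have "p = n * q" by (metis of_int_eq_iff of_int_mult)
  then show ?thesis by simp
qed

lemma cos_ne1_4: "cos (2*pi/4) \<noteq> 1" "cos (2*(2*pi/4)) \<noteq> 1" "cos (3*(2*pi/4)) \<noteq> 1"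
proof -
  show "cos (2*pi/4) \<noteq> 1" using not_cos1[of 1 4] by auto
  show "cos (2*(2*pi/4)) \<noteq> 1" using not_cos1[of 2 4] by auto
  show "cos (3*(2*pi/4)) \<noteq> 1" using not_cos1[of 3 4] by auto
qed

lemma cos_ne1_3: "cos (2*pi/3) \<noteq> 1" "cos (2*(2*pi/3)) \<noteq> 1" "cos (4*(2*pi/3)) \<noteq> 1"
proof -
  show "cos (2*pi/3) \<noteq> 1" using not_cos1[of 1 3] by auto
  show "cos (2*(2*pi/3)) \<noteq> 1" using not_cos1[of 2 3] by auto
  show "cos (4*(2*pi/3)) \<noteq> 1" using not_cos1[of 4 3] by auto
qed

lemma act2_rotz:
  assumes "M \<in> Sym2"
  shows "act2 (rotz t) M 1 3 = cos t * M 1 3 - sin t * M 2 3"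
        "act2 (rotz t) M 2 3 = sin t * M 1 3 + cos t * M 2 3"
        "act2 (rotz t) M 1 1 - act2 (rotz t) M 2 2 = (M 1 1 - M 2 2) * cos (2*t) - 2 * M 1 2 * sin (2*t)"
        "2 * act2 (rotz t) M 1 2 = (M 1 1 - M 2 2) * sin (2*t) + 2 * M 1 2 * cos (2*t)"
proof -
  have s: "M 2 1 = M 1 2" "M 3 1 = M 1 3" "M 3 2 = M 2 3" using assms by (auto simp: Sym2_def)
  have sc: "sin t ^ 2 + cos t ^ 2 = 1" by simp
  have c2: "cos (2*t) = cos t ^ 2 - sin t ^ 2" by (rule cos_double)
  have s2: "sin (2*t) = 2 * sin t * cos t" by (rule sin_double)
  note S = act2_def sum3 s rotz_nth
  show "act2 (rotz t) M 1 3 = cos t * M 1 3 - sin t * M 2 3" by (simp only: S; algebra)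
  show "act2 (rotz t) M 2 3 = sin t * M 1 3 + cos t * M 2 3" by (simp only: S; algebra)
  show "act2 (rotz t) M 1 1 - act2 (rotz t) M 2 2 = (M 1 1 - M 2 2) * cos (2*t) - 2 * M 1 2 * sin (2*t)"
    unfolding c2 s2 by (simp only: S; algebra)
  show "2 * act2 (rotz t) M 1 2 = (M 1 1 - M 2 2) * sin (2*t) + 2 * M 1 2 * cos (2*t)"
    unfolding c2 s2 by (simp only: S; algebra)
qed

lemma rot_fix_zero:
  fixes x y :: real
  assumes "cos t * x - sin t * y = x" "sin t * x + cos t * y = y" "cos t \<noteq> 1"
  shows "x = 0 \<and> y = 0"
proof -
  have sc: "sin t ^ 2 + cos t ^ 2 = 1" by simp
  have i1: "(2 - 2 * cos t) * x = (cos t - 1) * (cos t * x - sin t * y - x) + sin t * (sin t * x + cos t * y - y) + x * (1 - (sin t ^ 2 + cos t ^ 2))"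
    by algebra
  have i2: "(2 - 2 * cos t) * y = - sin t * (cos t * x - sin t * y - x) + (cos t - 1) * (sin t * x + cos t * y - y) + y * (1 - (sin t ^ 2 + cos t ^ 2))"
    by algebra
  have "(2 - 2 * cos t) * x = 0" using i1 assms(1,2) sc by simp
  moreover have "(2 - 2 * cos t) * y = 0" using i2 assms(1,2) sc by simp
  moreover have "2 - 2 * cos t \<noteq> 0" using assms(3) by simp
  ultimately show ?thesis by simp
qed

lemma uni_rotz:
  assumes "M \<in> Sym2" "act2 (rotz t) M = M" "cos t \<noteq> 1" "cos (2*t) \<noteq> 1"
  shows "uni M"
proof -
  note A = act2_rotz[OF assms(1), of t, unfolded assms(2)]
  have 1: "M 1 3 = 0 \<and> M 2 3 = 0"
    by (rule rot_fix_zero[OF _ _ assms(3)]) (use A in simp_all)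
  have 2: "M 1 1 - M 2 2 = 0 \<and> 2 * M 1 2 = 0"
    by (rule rot_fix_zero[OF _ _ assms(4)]) (use A in \<open>simp_all add: algebra_simps\<close>)
  have s: "M 2 1 = M 1 2" "M 3 1 = M 1 3" "M 3 2 = M 2 3" using assms by (auto simp: Sym2_def)
  show ?thesis using 1 2 s by (simp add: uni_def)
qed

lemma uni_rotz_sym:
  assumes "M \<in> Sym2" "act2 (rotz (2*pi/real n)) M = M" "n = 3 \<or> n = 4"
  shows "uni M"
  using assms cos_ne1_3 cos_ne1_4
  by (auto intro: uni_rotz[OF assms(1) assms(2)])

lemma act2_uni:
  assumes "uni M" "g = rotz t \<or> g = X"
  shows "act2 g M = M"
proof -
  have K: "M 1 2 = 0" "M 2 1 = 0" "M 1 3 = 0" "M 3 1 = 0" "M 2 3 = 0" "M 3 2 = 0" "M 2 2 = M 1 1"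
    using assms(1) by (auto simp: uni_def)
  have sc: "sin t ^ 2 + cos t ^ 2 = 1" by simp
  have "\<forall>i j. act2 g M i j = M i j"
    using assms(2)
  proof
    assume g: "g = rotz t"
    show ?thesis unfolding forall_3 g
      apply (intro conjI)
      apply (simp_all only: act2_def sum3 K rotz_nth)
      apply (use sc in algebra)+
      done
  next
    assume g: "g = X"
    show ?thesis unfolding forall_3 g by (simp add: act2_def sum3 K)
  qed
  then show ?thesis by blast
qed

lemma uni_O2_fix:
  assumes "uni M"
  shows "O2set \<subseteq> symgroup2 M"
proof -
  have "O2 \<subseteq> symgroup2 M" unfolding O2_def
    by (rule gen_group_sub[OF groupish_sym2])
       (use assms act2_uni rotz_SO3 X_SO3 in \<open>auto simp: symgroup2_def\<close>)
  then show ?thesis by (simp add: O2_eq)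
qed

lemma alg1: "(x1::real)*x1*a + x2*x2*a + x3*x3*b = a \<Longrightarrow> x1*x1 + x2*x2 + x3*x3 = 1 \<Longrightarrow> (b - a)*(x3*x3) = 0"
proof -
  assume h: "x1*x1*a + x2*x2*a + x3*x3*b = a" "x1*x1 + x2*x2 + x3*x3 = 1"
  have "(b - a)*(x3*x3) = (x1*x1*a + x2*x2*a + x3*x3*b - a) - a * (x1*x1 + x2*x2 + x3*x3 - 1)"
    by (simp add: algebra_simps)
  then show ?thesis using h by simp
qed
lemma alg2: "(x1::real)*x1*a + x2*x2*a + x3*x3*b = b \<Longrightarrow> x1*x1 + x2*x2 + x3*x3 = 1 \<Longrightarrow> (b - a)*(x3*x3 - 1) = 0"
proof -
  assume h: "x1*x1*a + x2*x2*a + x3*x3*b = b" "x1*x1 + x2*x2 + x3*x3 = 1"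
  have "(b - a)*(x3*x3 - 1) = (x1*x1*a + x2*x2*a + x3*x3*b - b) - a * (x1*x1 + x2*x2 + x3*x3 - 1)"
    by (simp add: algebra_simps)
  then show ?thesis using h by simp
qed
lemma alg3:
  fixes a b c d :: real
  assumes h: "a^2 + c^2 = 1" "a * b + c * d = 0" "a * d - b * c = 1"
  shows "d = a" "b = - c"
proof -
  have "a - d = d * (a^2 + c^2 - 1) - a * (a * d - b * c - 1) - c * (a * b + c * d)"
    by (simp add: algebra_simps power2_eq_square)
  then show "d = a" using h by simp
  have "b + c = - (b * (a^2 + c^2 - 1) + c * (a * d - b * c - 1) - a * (a * b + c * d))"
    by (simp add: algebra_simps power2_eq_square)
  then show "b = - c" using h by simp
qed
lemma alg4: "(x::real) * x = 1 \<Longrightarrow> x = 1 \<or> x = -1"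
proof -
  assume "x * x = 1"
  then have "(x - 1) * (x + 1) = 0" by (simp add: algebra_simps)
  then show ?thesis by auto
qed

lemma blockrot:
  assumes g: "g \<in> SO3" and z: "g$1$3 = 0" "g$2$3 = 0" "g$3$1 = 0" "g$3$2 = 0" "g$3$3 = 1"
  shows "\<exists>t. g = rotz t"
proof -
  note o = orth3_eqs[OF conjunct1[OF SO3_orth[OF g]] conjunct2[OF SO3_orth[OF g]]]
  have d: "det g = 1" using g by (simp add: SO3_def)
  then have d': "g$1$1 * g$2$2 - g$1$2 * g$2$1 = 1" using z by (simp add: det_3)
  have c1: "g$1$1^2 + g$2$1^2 = 1" using o(1) z by (simp add: power2_eq_square)
  have o12: "g$1$1 * g$1$2 + g$2$1 * g$2$2 = 0" using o(4) z by simp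
  have e22: "g$2$2 = g$1$1" by (rule alg3(1)[OF c1 o12 d'])
  have e12: "g$1$2 = - g$2$1" by (rule alg3(2)[OF c1 o12 d'])
  obtain t where t: "g$1$1 = cos t" "g$2$1 = sin t"
    using sincos_total_2pi[OF c1] by metis
  have "g = rotz t" using z e22 e12 t by (simp add: mat3_eq)
  then show ?thesis by blast
qed

lemma SO3_O2set:
  assumes g: "g \<in> SO3" and z: "g$1$3 = 0" "g$2$3 = 0" "g$3$1 = 0" "g$3$2 = 0"
  shows "g \<in> O2set"
proof -
  note o = orth3_eqs[OF conjunct1[OF SO3_orth[OF g]] conjunct2[OF SO3_orth[OF g]]]
  have "g$3$3 * g$3$3 = 1" using o(9) z by simp
  then have "g$3$3 = 1 \<or> g$3$3 = -1" by (rule alg4)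
  then show ?thesis
  proof
    assume "g$3$3 = 1"
    then obtain t where "g = rotz t" using blockrot[OF g z] by blast
    then show ?thesis by (auto simp: O2set_def)
  next
    assume m: "g$3$3 = -1"
    have g': "g ** X \<in> SO3" using g X_SO3 SO3_mult by blast
    have "\<exists>t. g ** X = rotz t"
      by (rule blockrot[OF g']) (use z m in \<open>simp_all add: mmult_nth\<close>)
    then obtain t where t: "g ** X = rotz t" by blast
    have "g = (g ** X) ** X" by (simp add: matrix_mul_assoc[symmetric] XX)
    then have "g = rotz t ** X" using t by simp
    then show ?thesis by (auto simp: O2set_def)
  qed
qed

lemma stab_uni:
  assumes u: "uni K" and ni: "K 1 1 \<noteq> K 3 3" and g: "g \<in> SO3" and f: "act2 g K = K"
  shows "g \<in> O2set"
proof -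
  note o = orth3_eqs[OF conjunct1[OF SO3_orth[OF g]] conjunct2[OF SO3_orth[OF g]]]
  have K: "K 1 2 = 0" "K 2 1 = 0" "K 1 3 = 0" "K 3 1 = 0" "K 2 3 = 0" "K 3 2 = 0" "K 2 2 = K 1 1"
    using u by (auto simp: uni_def)
  have ab: "K 3 3 - K 1 1 \<noteq> 0" using ni by simp
  have "act2 g K i j = K i j" for i j using f by simp
  note e = this[of 1 1] this[of 2 2] this[of 3 3]
  have e1': "g$1$1*g$1$1*K 1 1 + g$1$2*g$1$2*K 1 1 + g$1$3*g$1$3*K 3 3 = K 1 1"
    using e(1) by (simp only: act2_def sum3 K; algebra)
  have e2': "g$2$1*g$2$1*K 1 1 + g$2$2*g$2$2*K 1 1 + g$2$3*g$2$3*K 3 3 = K 1 1"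
    using e(2) by (simp only: act2_def sum3 K; algebra)
  have e3': "g$3$1*g$3$1*K 1 1 + g$3$2*g$3$2*K 1 1 + g$3$3*g$3$3*K 3 3 = K 3 3"
    using e(3) by (simp only: act2_def sum3 K; algebra)
  have e1: "(K 3 3 - K 1 1) * (g$1$3 * g$1$3) = 0"
    by (rule alg1[OF e1' o(7)])
  have e2: "(K 3 3 - K 1 1) * (g$2$3 * g$2$3) = 0"
    by (rule alg1[OF e2' o(8)])
  have e3: "(K 3 3 - K 1 1) * (g$3$3 * g$3$3 - 1) = 0"
    by (rule alg2[OF e3' o(9)])
  have z1: "g$1$3 = 0" using e1 ab by simp
  have z2: "g$2$3 = 0" using e2 ab by simp
  have "g$3$3 * g$3$3 = 1" using e3 ab by simp
  then have "g$3$1 * g$3$1 + g$3$2 * g$3$2 = 0" using o(9) by simp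
  then have z3: "g$3$1 = 0" "g$3$2 = 0" by (simp_all add: sum_squares_eq_zero_iff)
  show ?thesis by (rule SO3_O2set[OF g z1 z2 z3])
qed

lemma Dn_O2set: "Dn n \<subseteq> O2set"
proof -
  have "Dn n \<subseteq> O2" unfolding Dn_def O2_def by (rule gen_group_mono) auto
  then show ?thesis by (simp add: O2_eq)
qed

lemma rotz_nat_mem:
  assumes "groupish G" "rotz th \<in> G"
  shows "rotz (real m * th) \<in> G"
proof (induction m)
  case 0 then show ?case using assms(1) by (simp add: rotz_zero groupish_def)
next
  case (Suc m)
  have "rotz (real (Suc m) * th) = rotz th ** rotz (real m * th)"
    by (simp add: rotz_add algebra_simps)
  then show ?case using Suc assms by (simp add: groupish_def)
qed

lemma rotz_int_mem:
  assumes "groupish G" "rotz th \<in> G"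
  shows "rotz (of_int k * th) \<in> G"
proof (cases "k \<ge> 0")
  case True
  define m where "m = nat k"
  have "k = int m" using True by (simp add: m_def)
  then show ?thesis using rotz_nat_mem[OF assms, of m] by simp
next
  case False
  define m where "m = nat (- k)"
  have m: "k = - int m" using False by (simp add: m_def)
  have "matrix_inv (rotz (real m * th)) = rotz (- (real m * th))"
    by (simp add: SO3_inv rotz_SO3 rotz_transpose)
  moreover have "matrix_inv (rotz (real m * th)) \<in> G"
    using rotz_nat_mem[OF assms, of m] assms(1) unfolding groupish_def by blast
  ultimately have "rotz (- (real m * th)) \<in> G" by simp
  then show ?thesis using m by simp
qed

lemma groupish_Dn: "groupish (Dn n)"
  unfolding Dn_def by (rule groupish_gen)

lemma Dn_gens: "rotz (2 * pi / real n) \<in> Dn n" "X \<in> Dn n"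
  unfolding Dn_def by (auto intro: gen_group.gen)

lemma conj_rotz_O2set:
  assumes "k \<in> O2set"
  shows "conj (rotz p) k \<in> O2set"
proof -
  have c: "conj (rotz p) k = rotz p ** k ** rotz (- p)"
    by (simp add: conj_SO3[OF rotz_SO3] rotz_transpose)
  from assms obtain t where "k = rotz t \<or> k = rotz t ** X" by (auto simp: O2set_def)
  then show ?thesis
  proof
    assume kt: "k = rotz t"
    have "conj (rotz p) k = rotz p ** rotz t ** rotz (- p)" using c kt by simp
    also have "\<dots> = rotz (p + t + - p)" by (simp add: rotz_add)
    finally show ?thesis by (simp add: O2set_def)
  next
    assume kt: "k = rotz t ** X"
    have "conj (rotz p) k = rotz p ** (rotz t ** X) ** rotz (- p)" using c kt by simp
    also have "\<dots> = rotz p ** rotz t ** (X ** rotz (- p))" by (simp add: matrix_mul_assoc)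
    finally have "conj (rotz p) k = rotz p ** rotz t ** (X ** rotz (- p))" .
    also have "\<dots> = rotz (p + t + p) ** X" by (simp add: X_rotz matrix_mul_assoc rotz_add)
    finally show ?thesis by (auto simp: O2set_def)
  qed
qed

lemma exact_Dn:
  assumes c: "core H" and sub: "symgroup4 H \<subseteq> O2set" and fx: "act4 X H = H"
    and fr: "act4 (rotz (2 * pi / real n)) H = H"
    and only: "\<And>t. act4 (rotz t) H = H \<Longrightarrow> cos (real n * t) = 1"
    and n: "n > 0"
  shows "symgroup4 H = Dn n"
proof
  show "Dn n \<subseteq> symgroup4 H" unfolding Dn_def
    by (rule gen_group_sub[OF groupish_sym4]) (use fx fr rotz_SO3 X_SO3 in \<open>auto simp: symgroup4_def\<close>)
  have rot: "rotz t \<in> Dn n" if "act4 (rotz t) H = H" for t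
  proof -
    have "cos (real n * t) = 1" by (rule only[OF that])
    then obtain k :: int where k: "real n * t = of_int k * 2 * pi" using cos_one_2pi_int by blast
    have "t = of_int k * (2 * pi / real n)" using k n by (simp add: field_simps)
    then show ?thesis using rotz_int_mem[OF groupish_Dn Dn_gens(1)] by simp
  qed
  show "symgroup4 H \<subseteq> Dn n"
  proof
    fix g assume g: "g \<in> symgroup4 H"
    then have gf: "act4 g H = H" by (simp add: symgroup4_def)
    from g sub obtain t where "g = rotz t \<or> g = rotz t ** X" by (auto simp: O2set_def)
    then show "g \<in> Dn n"
    proof
      assume "g = rotz t" then show ?thesis using rot gf by simp
    next
      assume gt: "g = rotz t ** X"
      have "act4 (rotz t) H = act4 (rotz t) (act4 X H)" using fx by simp
      also have "\<dots> = H" using gf gt by (simp add: act4_mult)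
      finally have "rotz t \<in> Dn n" by (rule rot)
      then show ?thesis using gt groupish_Dn Dn_gens(2) by (simp add: groupish_def)
    qed
  qed
qed

lemma in_class_self: "in_class G G"
proof -
  have "G = conj (mat 1) ` G" by (simp add: conj_one)
  then show ?thesis unfolding in_class_conj using SO3_one by blast
qed

lemma rotz_fix:
  assumes c: "core H"
    and e: "(3*(H 1 1 1 1 + H 1 1 2 2) + (H 1 1 1 1 - 3 * H 1 1 2 2) * cos (4*t) - 4 * H 1 1 1 2 * sin (4*t))/4 = H 1 1 1 1"
      "((H 1 1 1 1 + H 1 1 2 2) - (H 1 1 1 1 - 3 * H 1 1 2 2) * cos (4*t) + 4 * H 1 1 1 2 * sin (4*t))/4 = H 1 1 2 2"
      "H 1 1 1 2 * cos (4*t) + (H 1 1 1 1 - 3 * H 1 1 2 2) * sin (4*t) / 4 = H 1 1 1 2"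
      "H 1 1 1 3 * cos (3*t) - H 1 1 2 3 * sin (3*t) = H 1 1 1 3"
      "H 1 1 2 3 * cos (3*t) + H 1 1 1 3 * sin (3*t) = H 1 1 2 3"
  shows "act4 (rotz t) H = H"
  by (rule core_eq[OF rotz_core(1)[OF c] c]) (simp_all only: rotz_core[OF c] e)

lemma X_fix:
  assumes c: "core H" and e: "H 1 1 1 2 = 0" "H 1 1 1 3 = 0"
  shows "act4 X H = H"
  by (rule core_eq[OF X_core(1)[OF c] c]) (simp_all add: X_core[OF c] e)

lemma transport_rotz:
  assumes c: "core H" and sub: "symgroup4 H \<subseteq> O2set"
  shows "core (act4 (rotz p) H)" "symgroup4 (act4 (rotz p) H) \<subseteq> O2set"
    "in_class (symgroup4 (act4 (rotz p) H)) K \<Longrightarrow> in_class (symgroup4 H) K"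
proof -
  show "core (act4 (rotz p) H)" by (rule rotz_core(1)[OF c])
  have e: "symgroup4 (act4 (rotz p) H) = conj (rotz p) ` symgroup4 H"
    by (rule sym4_transport[OF rotz_SO3])
  show "symgroup4 (act4 (rotz p) H) \<subseteq> O2set"
    unfolding e using sub conj_rotz_O2set by blast
  show "in_class (symgroup4 (act4 (rotz p) H)) K \<Longrightarrow> in_class (symgroup4 H) K"
    unfolding e using in_class_transport[OF rotz_SO3] by blast
qed

lemma polar:
  fixes x y :: real
  assumes "x \<noteq> 0 \<or> y \<noteq> 0"
  obtains r al where "r > 0" "x = r * cos al" "y = r * sin al"
proof -
  define r where "r = sqrt (x^2 + y^2)"
  have pos: "x^2 + y^2 > 0" using assms by (auto simp: add_pos_nonneg add_nonneg_pos)
  then have r: "r > 0" "r^2 = x^2 + y^2" by (simp_all add: r_def)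
  have "(x/r)^2 + (y/r)^2 = (x^2 + y^2) / r^2" by (simp add: power_divide add_divide_distrib)
  also have "\<dots> = 1" using r pos by (metis less_irrefl divide_self)
  finally have "(x/r)^2 + (y/r)^2 = 1" .
  then obtain al where al: "x/r = cos al" "y/r = sin al" using sincos_total_2pi by metis
  have "x = r * cos al" "y = r * sin al" using al r(1) by (simp_all add: field_simps)
  then show ?thesis using that r(1) by blast
qed

lemma core_TI:
  assumes c: "core H" and sub: "symgroup4 H \<subseteq> O2set"
    and z: "H 1 1 1 1 = 3 * H 1 1 2 2" "H 1 1 1 2 = 0" "H 1 1 1 3 = 0" "H 1 1 2 3 = 0"
  shows "in_class (symgroup4 H) O2"
proof -
  have fr: "act4 (rotz t) H = H" for t
    by (rule rotz_fix[OF c]) (simp_all add: z)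
  have fx: "act4 X H = H" by (rule X_fix[OF c]) (simp_all add: z)
  have "O2set \<subseteq> symgroup4 H"
  proof
    fix k assume "k \<in> O2set"
    then obtain t where "k = rotz t \<or> k = rotz t ** X" by (auto simp: O2set_def)
    then have "act4 k H = H \<and> k \<in> SO3"
      using fr fx rotz_SO3 X_SO3 SO3_mult by (auto simp: act4_mult)
    then show "k \<in> symgroup4 H" by (simp add: symgroup4_def)
  qed
  then have "symgroup4 H = O2" using sub by (simp add: O2_eq)
  then show ?thesis by (simp add: in_class_self)
qed

lemma core_D4:
  assumes c: "core H" and sub: "symgroup4 H \<subseteq> O2set"
    and nz: "H 1 1 1 1 - 3 * H 1 1 2 2 \<noteq> 0 \<or> H 1 1 1 2 \<noteq> 0"
    and z: "H 1 1 1 3 = 0" "H 1 1 2 3 = 0"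
  shows "in_class (symgroup4 H) (Dn 4)"
proof -
  define m where "m = H 1 1 1 1 - 3 * H 1 1 2 2"
  define b where "b = H 1 1 1 2"
  have "m \<noteq> 0 \<or> 4 * b \<noteq> 0" using nz by (simp add: m_def b_def)
  then obtain r al where r: "r > 0" "m = r * cos al" "4 * b = r * sin al" by (rule polar)
  define p where "p = - al / 4"
  define H' where "H' = act4 (rotz p) H"
  have c': "core H'" and sub': "symgroup4 H' \<subseteq> O2set"
    using transport_rotz[OF c sub] by (simp_all add: H'_def)
  have c4: "cos (4 * p) = cos al" "sin (4 * p) = - sin al" by (simp_all add: p_def)
  have sc: "sin al ^ 2 + cos al ^ 2 = 1" by simp
  have b': "H' 1 1 1 2 = 0"
    unfolding H'_def rotz_core(4)[OF c] c4 using r by (simp add: m_def[symmetric] b_def[symmetric] algebra_simps)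
  have m': "H' 1 1 1 1 - 3 * H' 1 1 2 2 = r"
  proof -
    have "H' 1 1 1 1 - 3 * H' 1 1 2 2 = m * cos al + 4 * b * sin al"
      unfolding H'_def rotz_core(2,3)[OF c] c4 by (simp add: m_def b_def field_simps)
    also have "\<dots> = r * (cos al * cos al) + r * (sin al * sin al)" using r by (simp add: algebra_simps)
    also have "\<dots> = r" by (simp add: distrib_left[symmetric])
    finally show ?thesis .
  qed
  have f': "H' 1 1 1 3 = 0" "H' 1 1 2 3 = 0"
    unfolding H'_def rotz_core(5,6)[OF c] z by simp_all
  have fx: "act4 X H' = H'" by (rule X_fix[OF c' b' f'(1)])
  have fr: "act4 (rotz (2 * pi / real 4)) H' = H'"
    by (rule rotz_fix[OF c']) (use b' f' m' in \<open>simp_all add: field_simps\<close>)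
  have only: "cos (real 4 * t) = 1" if "act4 (rotz t) H' = H'" for t
  proof -
    have "(3*(H' 1 1 1 1 + H' 1 1 2 2) + (H' 1 1 1 1 - 3 * H' 1 1 2 2) * cos (4*t) - 4 * H' 1 1 1 2 * sin (4*t))/4 = H' 1 1 1 1"
      using rotz_core(2)[OF c', of t] that by simp
    then have "r * cos (4*t) = r" using m' b' by (simp add: field_simps) 
    then show ?thesis using r(1) by simp
  qed
  have "symgroup4 H' = Dn 4" by (rule exact_Dn[OF c' sub' fx fr only]) simp_all
  then have "in_class (symgroup4 H') (Dn 4)" by (simp add: in_class_self)
  then show ?thesis using transport_rotz(3)[OF c sub] by (simp add: H'_def)
qed

lemma core_D3:
  assumes c: "core H" and sub: "symgroup4 H \<subseteq> O2set"
    and z: "H 1 1 1 1 = 3 * H 1 1 2 2" "H 1 1 1 2 = 0"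
    and nz: "H 1 1 1 3 \<noteq> 0 \<or> H 1 1 2 3 \<noteq> 0"
  shows "in_class (symgroup4 H) (Dn 3)"
proof -
  define f where "f = H 1 1 1 3"
  define g where "g = H 1 1 2 3"
  have "g \<noteq> 0 \<or> f \<noteq> 0" using nz by (auto simp: f_def g_def)
  then obtain r al where r: "r > 0" "g = r * cos al" "f = r * sin al" by (rule polar)
  define p where "p = al / 3"
  define H' where "H' = act4 (rotz p) H"
  have c': "core H'" and sub': "symgroup4 H' \<subseteq> O2set"
    using transport_rotz[OF c sub] by (simp_all add: H'_def)
  have c3: "cos (3 * p) = cos al" "sin (3 * p) = sin al" by (simp_all add: p_def)
  have sc: "sin al ^ 2 + cos al ^ 2 = 1" by simp
  have f': "H' 1 1 1 3 = 0"
    unfolding H'_def rotz_core(5)[OF c] c3 using r by (simp add: f_def[symmetric] g_def[symmetric] algebra_simps)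
  have g': "H' 1 1 2 3 = r"
  proof -
    have "H' 1 1 2 3 = g * cos al + f * sin al"
      unfolding H'_def rotz_core(6)[OF c] c3 by (simp add: f_def g_def)
    also have "\<dots> = r * (cos al * cos al) + r * (sin al * sin al)" using r by (simp add: algebra_simps)
    also have "\<dots> = r" by (simp add: distrib_left[symmetric])
    finally show ?thesis .
  qed
  have a': "H' 1 1 1 1 = 3 * H' 1 1 2 2" "H' 1 1 1 2 = 0"
    unfolding H'_def rotz_core(2,3,4)[OF c] z by (simp_all add: field_simps)
  have fx: "act4 X H' = H'" by (rule X_fix[OF c' a'(2) f'])
  have fr: "act4 (rotz (2 * pi / real 3)) H' = H'"
    by (rule rotz_fix[OF c']) (use a' f' g' in \<open>simp_all add: field_simps\<close>)
  have only: "cos (real 3 * t) = 1" if "act4 (rotz t) H' = H'" for t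
  proof -
    have "H' 1 1 2 3 * cos (3*t) + H' 1 1 1 3 * sin (3*t) = H' 1 1 2 3"
      using rotz_core(6)[OF c', of t] that by simp
    then have "r * cos (3*t) = r" using f' g' by simp
    then show ?thesis using r(1) by simp
  qed
  have "symgroup4 H' = Dn 3" by (rule exact_Dn[OF c' sub' fx fr only]) simp_all
  then have "in_class (symgroup4 H') (Dn 3)" by (simp add: in_class_self)
  then show ?thesis using transport_rotz(3)[OF c sub] by (simp add: H'_def)
qed

lemma core_main:
  assumes c: "core H" and sub: "symgroup4 H \<subseteq> O2set" and d13: "d2 H 1 3 = 0" and d23: "d2 H 2 3 = 0"
  shows "in_class (symgroup4 H) (Dn 4) \<or> in_class (symgroup4 H) (Dn 3) \<or> in_class (symgroup4 H) O2"
proof -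
  define m where "m = H 1 1 1 1 - 3 * H 1 1 2 2"
  define b where "b = H 1 1 1 2"
  define f where "f = H 1 1 1 3"
  define g where "g = H 1 1 2 3"
  have e1: "m * f + 4 * b * g = 0" using d13 d2_core(1)[OF c] by (simp add: m_def b_def f_def g_def)
  have e2: "- m * g + 4 * b * f = 0" using d23 d2_core(2)[OF c] by (simp add: m_def b_def f_def g_def)
  have i1: "(m^2 + 16 * b^2) * f = m * (m * f + 4 * b * g) + 4 * b * (- m * g + 4 * b * f)"
    by (simp add: algebra_simps power2_eq_square)
  have i2: "(m^2 + 16 * b^2) * g = 4 * b * (m * f + 4 * b * g) - m * (- m * g + 4 * b * f)"
    by (simp add: algebra_simps power2_eq_square)
  have zf: "(m^2 + 16 * b^2) * f = 0" using i1 e1 e2 by simp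
  have zg: "(m^2 + 16 * b^2) * g = 0" using i2 e1 e2 by simp
  consider (d4) "m \<noteq> 0 \<or> b \<noteq> 0" | (d3) "m = 0" "b = 0" "f \<noteq> 0 \<or> g \<noteq> 0" | (ti) "m = 0" "b = 0" "f = 0" "g = 0"
    by blast
  then show ?thesis
  proof cases
    case d4
    then have "m^2 + 16 * b^2 \<noteq> 0" by (auto simp: add_nonneg_eq_0_iff)
    then have "f = 0" "g = 0" using zf zg by simp_all
    then show ?thesis using core_D4[OF c sub] d4 by (simp add: m_def b_def f_def g_def)
  next
    case d3
    then show ?thesis using core_D3[OF c sub] by (simp add: m_def b_def f_def g_def)
  next
    case ti
    then show ?thesis using core_TI[OF c sub] by (simp add: m_def b_def f_def g_def)
  qed
qed

definition sm :: "real \<Rightarrow> mat3 \<Rightarrow> mat3" where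
  "sm k G = (\<chi> i j. k * G$i$j)"

lemma sm_nth [simp]: "sm k G $ i $ j = k * G$i$j"
  by (simp add: sm_def)

lemma act4_sm: "act4 (sm k G) T i j p q = k^4 * act4 G T i j p q"
  by (simp add: act4_def sum_distrib_left power4_eq_xxxx mult_ac)

lemma matc_nth [simp]:
  "(mat c::mat3)$1$1 = c" "(mat c::mat3)$1$2 = 0" "(mat c::mat3)$1$3 = 0"
  "(mat c::mat3)$2$1 = 0" "(mat c::mat3)$2$2 = c" "(mat c::mat3)$2$3 = 0"
  "(mat c::mat3)$3$1 = 0" "(mat c::mat3)$3$2 = 0" "(mat c::mat3)$3$3 = c"
  by (simp_all add: mat_def)

lemma sm_orth:
  assumes "transpose G ** G = mat c" "k * k * c = 1"
  shows "transpose (sm k G) ** sm k G = mat 1"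
proof -
  have "(transpose (sm k G) ** sm k G)$i$j = k * k * (transpose G ** G)$i$j" for i j
    by (simp add: matrix_matrix_mult_def sum_distrib_left mult_ac)
  then show ?thesis using assms by (simp add: vec_eq_iff mat_def)
qed

lemma sm_fix:
  assumes h: "H \<in> H4" and o: "transpose (sm k G) ** sm k G = mat 1" and kk: "k^4 * K4 = 1"
    and e: "act4 G H 1 1 1 1 = K4 * H 1 1 1 1" "act4 G H 1 1 1 2 = K4 * H 1 1 1 2" "act4 G H 1 1 2 2 = K4 * H 1 1 2 2"
      "act4 G H 1 2 2 2 = K4 * H 1 2 2 2" "act4 G H 2 2 2 2 = K4 * H 2 2 2 2" "act4 G H 1 1 1 3 = K4 * H 1 1 1 3"
      "act4 G H 1 1 2 3 = K4 * H 1 1 2 3" "act4 G H 1 2 2 3 = K4 * H 1 2 2 3" "act4 G H 2 2 2 3 = K4 * H 2 2 2 3"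
  shows "act4 (sm k G) H = H"
proof (rule H4_eq[OF H4_act4[OF o h] h])
  have "k^4 * (K4 * x) = x" for x using kk by (simp add: mult.assoc[symmetric])
  then show "act4 (sm k G) H 1 1 1 1 = H 1 1 1 1" "act4 (sm k G) H 1 1 1 2 = H 1 1 1 2" "act4 (sm k G) H 1 1 2 2 = H 1 1 2 2"
      "act4 (sm k G) H 1 2 2 2 = H 1 2 2 2" "act4 (sm k G) H 2 2 2 2 = H 2 2 2 2" "act4 (sm k G) H 1 1 1 3 = H 1 1 1 3"
      "act4 (sm k G) H 1 1 2 3 = H 1 1 2 3" "act4 (sm k G) H 1 2 2 3 = H 1 2 2 3" "act4 (sm k G) H 2 2 2 3 = H 2 2 2 3"
    by (simp_all add: act4_sm e)
qed

lemma sm_det: "det (sm k G) = k^3 * det G"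
  by (simp add: det_3 power3_eq_cube algebra_simps)


lemma rr:
  fixes r2 r3 :: real
  assumes "r2 * r2 = 2" "r3 * r3 = 3"
  shows "r2 * (r2 * x) = 2 * x" "r3 * (r3 * x) = 3 * x"
  using assms by (simp_all add: mult.assoc[symmetric])

definition GA :: "real \<Rightarrow> real \<Rightarrow> mat3" where
  "GA r2 r3 = vector [vector [0, 0, 1], vector [0, -1, 0], vector [1, 0, 0]]"

lemma GA_nth [simp]:
  "GA r2 r3$1$1 = 0" "GA r2 r3$1$2 = 0" "GA r2 r3$1$3 = 1" "GA r2 r3$2$1 = 0" "GA r2 r3$2$2 = -1" "GA r2 r3$2$3 = 0" "GA r2 r3$3$1 = 1" "GA r2 r3$3$2 = 0" "GA r2 r3$3$3 = 0"
  by (simp_all add: GA_def)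

lemma GA_SO3:
  assumes r: "r2 * r2 = 2" "r3 * r3 = 3"
  shows "sm (1) (GA r2 r3) \<in> SO3"
proof (rule SO3_I)
  note r' = rr[OF r]
  have "transpose (GA r2 r3) ** GA r2 r3 = mat 1"
    unfolding mat3_eq mmult_nth transpose_nth3 GA_nth matc_nth
    by (simp add: algebra_simps r r')
  then show "transpose (sm (1) (GA r2 r3)) ** sm (1) (GA r2 r3) = mat 1"
    by (rule sm_orth) simp
  have "det (GA r2 r3) * (1)^3 = 1"
    unfolding det_3 GA_nth by (simp add: algebra_simps r r' power_divide)
  then show "det (sm (1) (GA r2 r3)) = 1" by (simp add: sm_det mult.commute power_divide)
qed

lemma GA_fix:
  assumes c: "core H" and r: "r2 * r2 = 2" "r3 * r3 = 3"
    and z: "H 1 1 1 2 = 0" "H 1 1 1 3 = 0" "H 1 1 2 3 = 0" "H 1 1 1 1 = -2 * H 1 1 2 2"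
  shows "act4 (sm (1) (GA r2 r3)) H = H"
proof (rule sm_fix)
  note r' = rr[OF r]
  have h: "H \<in> H4" using c by (simp add: core_def)
  then show "H \<in> H4" .
  show "transpose (sm (1) (GA r2 r3)) ** sm (1) (GA r2 r3) = mat 1"
    using GA_SO3[OF r] by (simp add: SO3_def orthogonal_matrix)
  show "(1)^4 * 1 = (1::real)" by simp
  show "act4 (GA r2 r3) H 1 1 1 1 = 1 * H 1 1 1 1"
    by (simp only: act4_def sum3 GA_nth H4_simps[OF h] core_simps[OF c] z; simp add: algebra_simps r r')
  show "act4 (GA r2 r3) H 1 1 1 2 = 1 * H 1 1 1 2"
    by (simp only: act4_def sum3 GA_nth H4_simps[OF h] core_simps[OF c] z; simp add: algebra_simps r r')
  show "act4 (GA r2 r3) H 1 1 2 2 = 1 * H 1 1 2 2"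
    by (simp only: act4_def sum3 GA_nth H4_simps[OF h] core_simps[OF c] z; simp add: algebra_simps r r')
  show "act4 (GA r2 r3) H 1 2 2 2 = 1 * H 1 2 2 2"
    by (simp only: act4_def sum3 GA_nth H4_simps[OF h] core_simps[OF c] z; simp add: algebra_simps r r')
  show "act4 (GA r2 r3) H 2 2 2 2 = 1 * H 2 2 2 2"
    by (simp only: act4_def sum3 GA_nth H4_simps[OF h] core_simps[OF c] z; simp add: algebra_simps r r')
  show "act4 (GA r2 r3) H 1 1 1 3 = 1 * H 1 1 1 3"
    by (simp only: act4_def sum3 GA_nth H4_simps[OF h] core_simps[OF c] z; simp add: algebra_simps r r')
  show "act4 (GA r2 r3) H 1 1 2 3 = 1 * H 1 1 2 3"
    by (simp only: act4_def sum3 GA_nth H4_simps[OF h] core_simps[OF c] z; simp add: algebra_simps r r')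
  show "act4 (GA r2 r3) H 1 2 2 3 = 1 * H 1 2 2 3"
    by (simp only: act4_def sum3 GA_nth H4_simps[OF h] core_simps[OF c] z; simp add: algebra_simps r r')
  show "act4 (GA r2 r3) H 2 2 2 3 = 1 * H 2 2 2 3"
    by (simp only: act4_def sum3 GA_nth H4_simps[OF h] core_simps[OF c] z; simp add: algebra_simps r r')
qed

definition GB :: "real \<Rightarrow> real \<Rightarrow> mat3" where
  "GB r2 r3 = vector [vector [-1, 1, r2], vector [1, -1, r2], vector [r2, r2, 0]]"

lemma GB_nth [simp]:
  "GB r2 r3$1$1 = -1" "GB r2 r3$1$2 = 1" "GB r2 r3$1$3 = r2" "GB r2 r3$2$1 = 1" "GB r2 r3$2$2 = -1" "GB r2 r3$2$3 = r2" "GB r2 r3$3$1 = r2" "GB r2 r3$3$2 = r2" "GB r2 r3$3$3 = 0"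
  by (simp_all add: GB_def)

lemma GB_SO3:
  assumes r: "r2 * r2 = 2" "r3 * r3 = 3"
  shows "sm (1/2) (GB r2 r3) \<in> SO3"
proof (rule SO3_I)
  note r' = rr[OF r]
  have "transpose (GB r2 r3) ** GB r2 r3 = mat 4"
    unfolding mat3_eq mmult_nth transpose_nth3 GB_nth matc_nth
    by (simp add: algebra_simps r r')
  then show "transpose (sm (1/2) (GB r2 r3)) ** sm (1/2) (GB r2 r3) = mat 1"
    by (rule sm_orth) simp
  have "det (GB r2 r3) * (1/2)^3 = 1"
    unfolding det_3 GB_nth by (simp add: algebra_simps r r' power_divide)
  then show "det (sm (1/2) (GB r2 r3)) = 1" by (simp add: sm_det mult.commute power_divide)
qed

lemma GB_fix:
  assumes c: "core H" and r: "r2 * r2 = 2" "r3 * r3 = 3"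
    and z: "H 1 1 1 2 = 0" "H 1 1 1 3 = 0" "H 1 1 2 3 = 0" "H 1 1 2 2 = -3 * H 1 1 1 1"
  shows "act4 (sm (1/2) (GB r2 r3)) H = H"
proof (rule sm_fix)
  note r' = rr[OF r]
  have h: "H \<in> H4" using c by (simp add: core_def)
  then show "H \<in> H4" .
  show "transpose (sm (1/2) (GB r2 r3)) ** sm (1/2) (GB r2 r3) = mat 1"
    using GB_SO3[OF r] by (simp add: SO3_def orthogonal_matrix)
  show "(1/2)^4 * 16 = (1::real)" by (simp add: power_divide)
  show "act4 (GB r2 r3) H 1 1 1 1 = 16 * H 1 1 1 1"
    by (simp only: act4_def sum3 GB_nth H4_simps[OF h] core_simps[OF c] z; simp add: algebra_simps r r')
  show "act4 (GB r2 r3) H 1 1 1 2 = 16 * H 1 1 1 2"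
    by (simp only: act4_def sum3 GB_nth H4_simps[OF h] core_simps[OF c] z; simp add: algebra_simps r r')
  show "act4 (GB r2 r3) H 1 1 2 2 = 16 * H 1 1 2 2"
    by (simp only: act4_def sum3 GB_nth H4_simps[OF h] core_simps[OF c] z; simp add: algebra_simps r r')
  show "act4 (GB r2 r3) H 1 2 2 2 = 16 * H 1 2 2 2"
    by (simp only: act4_def sum3 GB_nth H4_simps[OF h] core_simps[OF c] z; simp add: algebra_simps r r')
  show "act4 (GB r2 r3) H 2 2 2 2 = 16 * H 2 2 2 2"
    by (simp only: act4_def sum3 GB_nth H4_simps[OF h] core_simps[OF c] z; simp add: algebra_simps r r')
  show "act4 (GB r2 r3) H 1 1 1 3 = 16 * H 1 1 1 3"
    by (simp only: act4_def sum3 GB_nth H4_simps[OF h] core_simps[OF c] z; simp add: algebra_simps r r')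
  show "act4 (GB r2 r3) H 1 1 2 3 = 16 * H 1 1 2 3"
    by (simp only: act4_def sum3 GB_nth H4_simps[OF h] core_simps[OF c] z; simp add: algebra_simps r r')
  show "act4 (GB r2 r3) H 1 2 2 3 = 16 * H 1 2 2 3"
    by (simp only: act4_def sum3 GB_nth H4_simps[OF h] core_simps[OF c] z; simp add: algebra_simps r r')
  show "act4 (GB r2 r3) H 2 2 2 3 = 16 * H 2 2 2 3"
    by (simp only: act4_def sum3 GB_nth H4_simps[OF h] core_simps[OF c] z; simp add: algebra_simps r r')
qed

definition GC :: "real \<Rightarrow> real \<Rightarrow> mat3" where
  "GC r2 r3 = vector [vector [-3, r3, 2*r2*r3], vector [r3, -5, 2*r2], vector [2*r2*r3, 2*r2, 2]]"

lemma GC_nth [simp]: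
  "GC r2 r3$1$1 = -3" "GC r2 r3$1$2 = r3" "GC r2 r3$1$3 = 2*r2*r3" "GC r2 r3$2$1 = r3" "GC r2 r3$2$2 = -5" "GC r2 r3$2$3 = 2*r2" "GC r2 r3$3$1 = 2*r2*r3" "GC r2 r3$3$2 = 2*r2" "GC r2 r3$3$3 = 2"
  by (simp_all add: GC_def)

lemma GC_SO3:
  assumes r: "r2 * r2 = 2" "r3 * r3 = 3"
  shows "sm (1/6) (GC r2 r3) \<in> SO3"
proof (rule SO3_I)
  note r' = rr[OF r]
  have "transpose (GC r2 r3) ** GC r2 r3 = mat 36"
    unfolding mat3_eq mmult_nth transpose_nth3 GC_nth matc_nth
    by (simp add: algebra_simps r r')
  then show "transpose (sm (1/6) (GC r2 r3)) ** sm (1/6) (GC r2 r3) = mat 1"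
    by (rule sm_orth) simp
  have "det (GC r2 r3) * (1/6)^3 = 1"
    unfolding det_3 GC_nth by (simp add: algebra_simps r r' power_divide)
  then show "det (sm (1/6) (GC r2 r3)) = 1" by (simp add: sm_det mult.commute power_divide)
qed

lemma GC_fix:
  assumes c: "core H" and r: "r2 * r2 = 2" "r3 * r3 = 3"
    and z: "H 1 1 1 1 = 3 * H 1 1 2 2" "H 1 1 1 2 = 0" "H 1 1 1 3 = 0" "H 1 1 2 3 = 5 * r2 * H 1 1 2 2"
  shows "act4 (sm (1/6) (GC r2 r3)) H = H"
proof (rule sm_fix)
  note r' = rr[OF r]
  have h: "H \<in> H4" using c by (simp add: core_def)
  then show "H \<in> H4" .
  show "transpose (sm (1/6) (GC r2 r3)) ** sm (1/6) (GC r2 r3) = mat 1"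
    using GC_SO3[OF r] by (simp add: SO3_def orthogonal_matrix)
  show "(1/6)^4 * 1296 = (1::real)" by (simp add: power_divide)
  show "act4 (GC r2 r3) H 1 1 1 1 = 1296 * H 1 1 1 1"
    by (simp only: act4_def sum3 GC_nth H4_simps[OF h] core_simps[OF c] z; simp add: algebra_simps r r')
  show "act4 (GC r2 r3) H 1 1 1 2 = 1296 * H 1 1 1 2"
    by (simp only: act4_def sum3 GC_nth H4_simps[OF h] core_simps[OF c] z; simp add: algebra_simps r r')
  show "act4 (GC r2 r3) H 1 1 2 2 = 1296 * H 1 1 2 2"
    by (simp only: act4_def sum3 GC_nth H4_simps[OF h] core_simps[OF c] z; simp add: algebra_simps r r')
  show "act4 (GC r2 r3) H 1 2 2 2 = 1296 * H 1 2 2 2"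
    by (simp only: act4_def sum3 GC_nth H4_simps[OF h] core_simps[OF c] z; simp add: algebra_simps r r')
  show "act4 (GC r2 r3) H 2 2 2 2 = 1296 * H 2 2 2 2"
    by (simp only: act4_def sum3 GC_nth H4_simps[OF h] core_simps[OF c] z; simp add: algebra_simps r r')
  show "act4 (GC r2 r3) H 1 1 1 3 = 1296 * H 1 1 1 3"
    by (simp only: act4_def sum3 GC_nth H4_simps[OF h] core_simps[OF c] z; simp add: algebra_simps r r')
  show "act4 (GC r2 r3) H 1 1 2 3 = 1296 * H 1 1 2 3"
    by (simp only: act4_def sum3 GC_nth H4_simps[OF h] core_simps[OF c] z; simp add: algebra_simps r r')
  show "act4 (GC r2 r3) H 1 2 2 3 = 1296 * H 1 2 2 3"
    by (simp only: act4_def sum3 GC_nth H4_simps[OF h] core_simps[OF c] z; simp add: algebra_simps r r')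
  show "act4 (GC r2 r3) H 2 2 2 3 = 1296 * H 2 2 2 3"
    by (simp only: act4_def sum3 GC_nth H4_simps[OF h] core_simps[OF c] z; simp add: algebra_simps r r')
qed

definition GD :: "real \<Rightarrow> real \<Rightarrow> mat3" where
  "GD r2 r3 = vector [vector [0, r3, r2*r3], vector [r3, -2, r2], vector [r2*r3, r2, -1]]"

lemma GD_nth [simp]:
  "GD r2 r3$1$1 = 0" "GD r2 r3$1$2 = r3" "GD r2 r3$1$3 = r2*r3" "GD r2 r3$2$1 = r3" "GD r2 r3$2$2 = -2" "GD r2 r3$2$3 = r2" "GD r2 r3$3$1 = r2*r3" "GD r2 r3$3$2 = r2" "GD r2 r3$3$3 = -1"
  by (simp_all add: GD_def)

lemma GD_SO3:
  assumes r: "r2 * r2 = 2" "r3 * r3 = 3"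
  shows "sm (1/3) (GD r2 r3) \<in> SO3"
proof (rule SO3_I)
  note r' = rr[OF r]
  have "transpose (GD r2 r3) ** GD r2 r3 = mat 9"
    unfolding mat3_eq mmult_nth transpose_nth3 GD_nth matc_nth
    by (simp add: algebra_simps r r')
  then show "transpose (sm (1/3) (GD r2 r3)) ** sm (1/3) (GD r2 r3) = mat 1"
    by (rule sm_orth) simp
  have "det (GD r2 r3) * (1/3)^3 = 1"
    unfolding det_3 GD_nth by (simp add: algebra_simps r r' power_divide)
  then show "det (sm (1/3) (GD r2 r3)) = 1" by (simp add: sm_det mult.commute power_divide)
qed

lemma GD_fix:
  assumes c: "core H" and r: "r2 * r2 = 2" "r3 * r3 = 3"
    and z: "H 1 1 1 1 = 3 * H 1 1 2 2" "H 1 1 1 2 = 0" "H 1 1 1 3 = 0" "H 1 1 2 3 = -5 * r2 * H 1 1 2 2"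
  shows "act4 (sm (1/3) (GD r2 r3)) H = H"
proof (rule sm_fix)
  note r' = rr[OF r]
  have h: "H \<in> H4" using c by (simp add: core_def)
  then show "H \<in> H4" .
  show "transpose (sm (1/3) (GD r2 r3)) ** sm (1/3) (GD r2 r3) = mat 1"
    using GD_SO3[OF r] by (simp add: SO3_def orthogonal_matrix)
  show "(1/3)^4 * 81 = (1::real)" by (simp add: power_divide)
  show "act4 (GD r2 r3) H 1 1 1 1 = 81 * H 1 1 1 1"
    by (simp only: act4_def sum3 GD_nth H4_simps[OF h] core_simps[OF c] z; simp add: algebra_simps r r')
  show "act4 (GD r2 r3) H 1 1 1 2 = 81 * H 1 1 1 2"
    by (simp only: act4_def sum3 GD_nth H4_simps[OF h] core_simps[OF c] z; simp add: algebra_simps r r')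
  show "act4 (GD r2 r3) H 1 1 2 2 = 81 * H 1 1 2 2"
    by (simp only: act4_def sum3 GD_nth H4_simps[OF h] core_simps[OF c] z; simp add: algebra_simps r r')
  show "act4 (GD r2 r3) H 1 2 2 2 = 81 * H 1 2 2 2"
    by (simp only: act4_def sum3 GD_nth H4_simps[OF h] core_simps[OF c] z; simp add: algebra_simps r r')
  show "act4 (GD r2 r3) H 2 2 2 2 = 81 * H 2 2 2 2"
    by (simp only: act4_def sum3 GD_nth H4_simps[OF h] core_simps[OF c] z; simp add: algebra_simps r r')
  show "act4 (GD r2 r3) H 1 1 1 3 = 81 * H 1 1 1 3"
    by (simp only: act4_def sum3 GD_nth H4_simps[OF h] core_simps[OF c] z; simp add: algebra_simps r r')
  show "act4 (GD r2 r3) H 1 1 2 3 = 81 * H 1 1 2 3"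
    by (simp only: act4_def sum3 GD_nth H4_simps[OF h] core_simps[OF c] z; simp add: algebra_simps r r')
  show "act4 (GD r2 r3) H 1 2 2 3 = 81 * H 1 2 2 3"
    by (simp only: act4_def sum3 GD_nth H4_simps[OF h] core_simps[OF c] z; simp add: algebra_simps r r')
  show "act4 (GD r2 r3) H 2 2 2 3 = 81 * H 2 2 2 3"
    by (simp only: act4_def sum3 GD_nth H4_simps[OF h] core_simps[OF c] z; simp add: algebra_simps r r')
qed

section \<open>Polynomial maps\<close>

lemma pf_sum3:
  fixes f :: "3 \<Rightarrow> tensor4 \<Rightarrow> real"
  assumes "\<And>k. f k \<in> polyfun4"
  shows "(\<lambda>T. \<Sum>k\<in>UNIV. f k T) \<in> polyfun4"
proof -
  have "(\<lambda>T. \<Sum>k\<in>UNIV. f k T) = (\<lambda>T. (\<lambda>T. f 1 T + f 2 T) T + f 3 T)" by (simp add: sum3)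
  also have "\<dots> \<in> polyfun4" using assms by (intro polyfun4.add) auto
  finally show ?thesis .
qed

lemma H4_pair: "H \<in> H4 \<Longrightarrow> H a b c d = H c d a b"
  by (metis H4_sw)

lemma H4_d2pair: "H \<in> H4 \<Longrightarrow> H k i m n * H m n k j = H i k m n * H j k m n"
  by (metis H4_sw)

lemma d2_canon:
  assumes "H \<in> H4"
  shows "d2 H i j = (\<Sum>k\<in>UNIV. \<Sum>m\<in>UNIV. \<Sum>n\<in>UNIV. H i k m n * H j k m n)"
  unfolding d2_def tr13_def dcontr44_def
  by (intro sum.cong refl) (rule H4_d2pair[OF assms])

lemma d2_Sym2: "H \<in> H4 \<Longrightarrow> d2 H \<in> Sym2"
  unfolding Sym2_def by (auto simp: d2_canon mult.commute)

lemma dc42_Sym2: "H \<in> H4 \<Longrightarrow> dcontr42 H a \<in> Sym2"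
  unfolding Sym2_def dcontr42_def by (auto intro!: sum.cong simp: H4_sw(1)[of H])

lemma c3_Sym2: "H \<in> H4 \<Longrightarrow> c3 H \<in> Sym2"
  by (simp add: c3_def dc42_Sym2)

lemma equiv_d2: "equivariant_poly_map d2"
  unfolding equivariant_poly_map_def
proof (intro conjI ballI allI)
  fix i j
  have pf: "(\<lambda>T. d2 T i j) \<in> polyfun4"
    unfolding d2_def tr13_def dcontr44_def
    by (intro pf_sum3 polyfun4.mult polyfun4.coord)
  show "\<exists>p\<in>polyfun4. \<forall>T\<in>H4. d2 T i j = p T"
    by (rule bexI[where x="\<lambda>T. d2 T i j"]) (simp_all add: pf)
next
  fix T assume "T \<in> H4" then show "d2 T \<in> Sym2" by (rule d2_Sym2)
next
  fix g T assume "g \<in> SO3" "T \<in> H4"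
  then show "d2 (act4 g T) = act2 g (d2 T)" using SO3_orth d2_equiv by blast
qed

lemma equiv_dc:
  assumes F: "equivariant_poly_map F"
  shows "equivariant_poly_map (\<lambda>T. dcontr42 T (F T))"
  unfolding equivariant_poly_map_def
proof (intro conjI ballI allI)
  have "\<forall>k l. \<exists>p\<in>polyfun4. \<forall>T\<in>H4. F T k l = p T" using F by (simp add: equivariant_poly_map_def)
  then obtain P where P: "\<And>k l. P k l \<in> polyfun4" "\<And>k l T. T \<in> H4 \<Longrightarrow> F T k l = P k l T"
    by metis
  fix i j
  have pf: "(\<lambda>T. \<Sum>k\<in>UNIV. \<Sum>l\<in>UNIV. T i j k l * P k l T) \<in> polyfun4"
    by (intro pf_sum3 polyfun4.mult polyfun4.coord P(1))
  have ev: "\<forall>T\<in>H4. dcontr42 T (F T) i j = (\<Sum>k\<in>UNIV. \<Sum>l\<in>UNIV. T i j k l * P k l T)"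
    by (simp add: dcontr42_def P(2))
  show "\<exists>p\<in>polyfun4. \<forall>T\<in>H4. dcontr42 T (F T) i j = p T"
    by (rule bexI[where x="\<lambda>T. \<Sum>k\<in>UNIV. \<Sum>l\<in>UNIV. T i j k l * P k l T"]) (simp_all add: pf ev)
next
  fix T assume "T \<in> H4" then show "dcontr42 T (F T) \<in> Sym2" by (rule dc42_Sym2)
next
  fix g T assume g: "g \<in> SO3" and T: "T \<in> H4"
  have "F (act4 g T) = act2 g (F T)" using F g T by (simp add: equivariant_poly_map_def)
  then show "dcontr42 (act4 g T) (F (act4 g T)) = act2 g (dcontr42 T (F T))"
    using dcontr42_equiv SO3_orth[OF g] by simp
qed

lemma equiv_c3: "equivariant_poly_map c3"
proof -
  have "c3 = (\<lambda>T. dcontr42 T (d2 T))" by (rule ext) (simp add: c3_def)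
  then show ?thesis using equiv_dc[OF equiv_d2] by simp
qed

lemma d2_Cov2: "d2 H \<in> Cov2 H" and c3_Cov2: "c3 H \<in> Cov2 H"
  using equiv_d2 equiv_c3 unfolding Cov2_def by blast+

lemma Cov2_props:
  assumes "M \<in> Cov2 H" "H \<in> H4"
  obtains F where "equivariant_poly_map F" "M = F H" "M \<in> Sym2"
    "\<And>g. g \<in> SO3 \<Longrightarrow> act2 g M = F (act4 g H)"
  using assms unfolding Cov2_def equivariant_poly_map_def by auto

section \<open>Isotropic second-order tensors\<close>

lemma iso_fix:
  assumes u: "uni M" and iso: "M 1 1 = M 3 3" and g: "g \<in> SO3"
  shows "act2 g M = M"
proof -
  have Mf: "M p q = M 1 1 * (if p = q then 1 else 0)" for p q
    using u iso exhaust_3[of p] exhaust_3[of q] by (auto simp: uni_def)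
  have inner: "(\<Sum>q\<in>UNIV. g$j$q * (if p = q then 1 else 0)) = g$j$p" for p j
    using exhaust_3[of p] by (auto simp: sum3)
  have "act2 g M i j = M i j" for i j
  proof -
    have "act2 g M i j = M 1 1 * (\<Sum>p\<in>UNIV. g$i$p * (\<Sum>q\<in>UNIV. g$j$q * (if p = q then 1 else 0)))"
      unfolding act2_def by (subst Mf) (simp add: sum_distrib_left mult_ac)
    also have "\<dots> = M 1 1 * (if i = j then 1 else 0)"
      by (simp add: inner orth_sum2[OF conjunct2[OF SO3_orth[OF g]]])
    also have "\<dots> = M i j" by (simp add: Mf[of i j])
    finally show ?thesis .
  qed
  then show ?thesis by blast
qed

lemma rotx_half_SO3: "rotx (pi/2) \<in> SO3"
  by (rule SO3_I) (simp_all add: mat3_eq mmult_nth det_3)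

lemma rotx_half_notO2: "rotx (pi/2) \<notin> O2set"
proof
  assume "rotx (pi/2) \<in> O2set"
  then have "rotx (pi/2)$3$3 = 1 \<or> rotx (pi/2)$3$3 = -1" by (rule O2set_33)
  then show False by simp
qed

lemma rotz_quarter_O2: "rotz (2 * pi / real 4) \<in> O2set"
  by (simp add: O2set_def)

lemma c3_iso:
  assumes h: "H \<in> H4" and u: "uni (d2 H)" and iso: "d2 H 1 1 = d2 H 3 3"
  shows "c3 H = (\<lambda>i j. 0)"
proof (rule ext)+
  fix i j
  have tr: "H i j 1 1 + H i j 2 2 + H i j 3 3 = 0"
    using H4_tr0[OF h, of i j] by (simp add: H4_pair[OF h, of _ _ i j])
  have "c3 H i j = d2 H 1 1 * (H i j 1 1 + H i j 2 2 + H i j 3 3)"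
    using u iso by (simp add: c3_def dcontr42_def sum3 uni_def algebra_simps)
  then show "c3 H i j = 0" using tr by simp
qed

section \<open>From a transversely isotropic covariant to the core normal form\<close>

lemma core_from_K:
  assumes h: "H \<in> H4" and uK: "uni K" and ni: "K 1 1 \<noteq> K 3 3" and uD: "uni (dcontr42 H K)"
  shows "core H"
proof -
  have K: "K 1 2 = 0" "K 2 1 = 0" "K 1 3 = 0" "K 3 1 = 0" "K 2 3 = 0" "K 3 2 = 0" "K 2 2 = K 1 1"
    using uK by (auto simp: uni_def)
  have D: "dcontr42 H K i j = (K 3 3 - K 1 1) * H i j 3 3" for i j
  proof -
    have tr: "H i j 1 1 + H i j 2 2 = - H i j 3 3"
      using H4_tr0[OF h, of i j] by (simp add: H4_pair[OF h, of _ _ i j])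
    have "dcontr42 H K i j = K 1 1 * (H i j 1 1 + H i j 2 2) + K 3 3 * H i j 3 3"
      by (simp add: dcontr42_def sum3 K algebra_simps)
    then show ?thesis using tr by (simp add: algebra_simps)
  qed
  have nz: "K 3 3 - K 1 1 \<noteq> 0" using ni by simp
  have e: "H 1 2 3 3 = 0" "H 1 3 3 3 = 0" "H 2 3 3 3 = 0" "H 2 2 3 3 = H 1 1 3 3"
    using uD nz by (auto simp: uni_def D)
  then show ?thesis using H4_tr[OF h] h by (simp add: core_def; linarith)
qed

lemma notO2_33: "g$3$3 \<noteq> 1 \<Longrightarrow> g$3$3 \<noteq> -1 \<Longrightarrow> g \<notin> O2set"
  using O2set_33 by blast

lemma no_iso:
  assumes h: "H \<in> H4" and fx: "act4 X H = H" and fr: "act4 (rotz (2*pi/real n)) H = H"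
    and n: "n = 3 \<or> n = 4" and iso: "d2 H 1 1 = d2 H 3 3"
  shows "\<exists>g\<in>SO3. act4 g H = H \<and> g \<notin> O2set"
proof -
  define t where "t = 2*pi/real n"
  define E :: tensor2 where "E = (\<lambda>i j. if i = 3 \<and> j = 3 then 1 else 0)"
  have "\<forall>i j. act2 (rotz t) E i j = E i j" by (simp add: forall_3 act2_def sum3 E_def)
  then have E: "act2 (rotz t) E = E" by blast
  have M: "dcontr42 H E = (\<lambda>i j. H i j 3 3)" by (rule ext)+ (simp add: dcontr42_def sum3 E_def)
  have "act2 (rotz t) (dcontr42 H E) = dcontr42 H E"
    using dcontr42_equiv[OF rotz_orth, of t H E] fr E by (simp add: t_def)
  then have fixM: "act2 (rotz (2*pi/real n)) (\<lambda>i j. H i j 3 3) = (\<lambda>i j. H i j 3 3)"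
    using M by (simp add: t_def)
  have symM: "(\<lambda>i j. H i j 3 3) \<in> Sym2" using H4_sw(1)[OF h] by (simp add: Sym2_def)
  have uM: "uni (\<lambda>i j. H i j 3 3)" by (rule uni_rotz_sym[OF symM fixM n])
  have c: "core H" using uM H4_tr[OF h] h by (simp add: uni_def core_def; linarith)
  have b0: "H 1 1 1 2 = 0" using X_core(4)[OF c] fx by simp
  have f0: "H 1 1 1 3 = 0" using X_core(5)[OF c] fx by simp
  have r2: "sqrt 2 * sqrt 2 = (2::real)" "sqrt 3 * sqrt 3 = (3::real)" by simp_all
  define a where "a = H 1 1 1 1"
  define cc where "cc = H 1 1 2 2"
  define g where "g = H 1 1 2 3"
  have I: "6*(a*cc) + 4*(a*a) + 6*(cc*cc) + 6*(g*g) = 20*(a*cc) + 10*(a*a) + 10*(cc*cc) + 4*(g*g)"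
    using iso d2_core(3,4)[OF c] b0 f0 by (simp add: power2_eq_square a_def cc_def g_def)
  from n show ?thesis
  proof
    assume n4: "n = 4"
    have "g * cos (3 * (2*pi/4)) + H 1 1 1 3 * sin (3 * (2*pi/4)) = g"
      using rotz_core(6)[OF c, of "2*pi/4"] fr n4 by (simp add: g_def)
    then have "g * (cos (3 * (2*pi/4)) - 1) = 0" using f0 by (simp add: algebra_simps)
    then have g0: "g = 0" using cos_ne1_4(3) by simp
    have "(3*a + cc) * (a + 2*cc) = 3*(a*a) + 7*(a*cc) + 2*(cc*cc)" by (simp add: algebra_simps)
    then have "(3*a + cc) * (a + 2*cc) = 0" using I g0 by simp
    then have "3*a + cc = 0 \<or> a + 2*cc = 0" by (simp only: mult_eq_0_iff)
    then have "a = -2 * cc \<or> cc = -3 * a" by linarith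
    then show ?thesis
    proof
      assume z: "a = -2 * cc"
      have "act4 (sm 1 (GA (sqrt 2) (sqrt 3))) H = H"
        by (rule GA_fix[OF c r2]) (use b0 f0 g0 z in \<open>simp_all add: a_def cc_def g_def\<close>)
      moreover have "sm 1 (GA (sqrt 2) (sqrt 3)) \<in> SO3" by (rule GA_SO3[OF r2])
      moreover have "sm 1 (GA (sqrt 2) (sqrt 3)) \<notin> O2set" by (rule notO2_33) simp_all
      ultimately show ?thesis by blast
    next
      assume z: "cc = -3 * a"
      have "act4 (sm (1/2) (GB (sqrt 2) (sqrt 3))) H = H"
        by (rule GB_fix[OF c r2]) (use b0 f0 g0 z in \<open>simp_all add: a_def cc_def g_def\<close>)
      moreover have "sm (1/2) (GB (sqrt 2) (sqrt 3)) \<in> SO3" by (rule GB_SO3[OF r2])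
      moreover have "sm (1/2) (GB (sqrt 2) (sqrt 3)) \<notin> O2set" by (rule notO2_33) simp_all
      ultimately show ?thesis by blast
    qed
  next
    assume n3: "n = 3"
    have "(3*(a + cc) + (a - 3 * cc) * cos (4*(2*pi/3)) - 4 * H 1 1 1 2 * sin (4*(2*pi/3)))/4 = a"
      using rotz_core(2)[OF c, of "2*pi/3"] fr n3 by (simp add: a_def cc_def)
    then have "(a - 3 * cc) * (cos (4*(2*pi/3)) - 1) = 0" using b0 by (simp add: field_simps)
    then have a3: "a = 3 * cc" using cos_ne1_3(3) by simp
    have "g * g = 50 * (cc * cc)" using I a3 by (simp add: algebra_simps)
    moreover have "(g - 5 * sqrt 2 * cc) * (g + 5 * sqrt 2 * cc) = g * g - 25 * (sqrt 2 * sqrt 2) * (cc * cc)"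
      by (simp add: algebra_simps)
    ultimately have "(g - 5 * sqrt 2 * cc) * (g + 5 * sqrt 2 * cc) = 0" by simp
    then have "g - 5 * sqrt 2 * cc = 0 \<or> g + 5 * sqrt 2 * cc = 0" by (simp only: mult_eq_0_iff)
    then have "g = 5 * sqrt 2 * cc \<or> g = -5 * sqrt 2 * cc" by linarith
    then show ?thesis
    proof
      assume z: "g = 5 * sqrt 2 * cc"
      have "act4 (sm (1/6) (GC (sqrt 2) (sqrt 3))) H = H"
        by (rule GC_fix[OF c r2]) (use b0 f0 a3 z in \<open>simp_all add: a_def cc_def g_def\<close>)
      moreover have "sm (1/6) (GC (sqrt 2) (sqrt 3)) \<in> SO3" by (rule GC_SO3[OF r2])
      moreover have "sm (1/6) (GC (sqrt 2) (sqrt 3)) \<notin> O2set" by (rule notO2_33) simp_all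
      ultimately show ?thesis by blast
    next
      assume z: "g = -5 * sqrt 2 * cc"
      have "act4 (sm (1/3) (GD (sqrt 2) (sqrt 3))) H = H"
        by (rule GD_fix[OF c r2]) (use b0 f0 a3 z in \<open>simp_all add: a_def cc_def g_def\<close>)
      moreover have "sm (1/3) (GD (sqrt 2) (sqrt 3)) \<in> SO3" by (rule GD_SO3[OF r2])
      moreover have "sm (1/3) (GD (sqrt 2) (sqrt 3)) \<notin> O2set" by (rule notO2_33) simp_all
      ultimately show ?thesis by blast
    qed
  qed
qed

lemma X_O2set: "X \<in> O2set"
proof -
  have "X = rotz 0 ** X" by (simp add: rotz_zero)
  then show ?thesis unfolding O2set_def by blast
qed

lemma act2_zero: "act2 g (\<lambda>i j. 0) = (\<lambda>i j. 0)"
  by (simp add: act2_def)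

lemma two_std:
  assumes h: "H \<in> H4" and K: "symgroup4 H = Dn 4 \<or> symgroup4 H = Dn 3 \<or> symgroup4 H = O2"
  shows "symgroup2_family (Cov2 H) = O2set" "symgroup2_family {d2 H, c3 H} = O2set"
proof -
  obtain n where n: "n = 3 \<or> n = 4" and rn: "rotz (2*pi/real n) \<in> symgroup4 H" and xs: "X \<in> symgroup4 H"
  proof -
    from K consider "symgroup4 H = Dn 4" | "symgroup4 H = Dn 3" | "symgroup4 H = O2" by blast
    then show ?thesis
    proof cases
      case 1 then show ?thesis using that[of 4] Dn_gens[of 4] by simp
    next
      case 2 then show ?thesis using that[of 3] Dn_gens[of 3] by simp
    next
      case 3 then show ?thesis using that[of 4] rotz_quarter_O2 X_O2set by (simp add: O2_eq)
    qed
  qed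
  have sub: "symgroup4 H \<subseteq> O2set" using K Dn_O2set by (auto simp: O2_eq)
  have fr: "act4 (rotz (2*pi/real n)) H = H" and fx: "act4 X H = H"
    using rn xs by (simp_all add: symgroup4_def)
  have ni: "d2 H 1 1 \<noteq> d2 H 3 3"
  proof
    assume iso: "d2 H 1 1 = d2 H 3 3"
    obtain g where g: "g \<in> SO3" "act4 g H = H" "g \<notin> O2set" using no_iso[OF h fx fr n iso] by blast
    then have "g \<in> symgroup4 H" by (simp add: symgroup4_def)
    then show False using sub g(3) by blast
  qed
  have covuni: "uni M" if mc: "M \<in> Cov2 H" for M
  proof -
    obtain F where F: "M = F H" "M \<in> Sym2" "\<And>g. g \<in> SO3 \<Longrightarrow> act2 g M = F (act4 g H)"
      using Cov2_props[OF mc h] by metis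
    have "act2 (rotz (2*pi/real n)) M = M" using F(1) F(3)[OF rotz_SO3] fr by simp
    then show ?thesis by (rule uni_rotz_sym[OF F(2) _ n])
  qed
  have ud: "uni (d2 H)" by (rule covuni[OF d2_Cov2])
  have A: "O2set \<subseteq> symgroup2_family A" if "A \<subseteq> Cov2 H" for A
  proof
    fix g assume g: "g \<in> O2set"
    have "act2 g M = M" if "M \<in> A" for M
      using uni_O2_fix[OF covuni] g that \<open>A \<subseteq> Cov2 H\<close> by (auto simp: symgroup2_def)
    then show "g \<in> symgroup2_family A" using g O2set_SO3 by (auto simp: symgroup2_family_def)
  qed
  have B: "symgroup2_family A \<subseteq> O2set" if "d2 H \<in> A" for A
  proof
    fix g assume "g \<in> symgroup2_family A"
    then have "g \<in> SO3" "act2 g (d2 H) = d2 H" using that by (auto simp: symgroup2_family_def)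
    then show "g \<in> O2set" by (rule stab_uni[OF ud ni])
  qed
  show "symgroup2_family (Cov2 H) = O2set"
    using A[of "Cov2 H"] B[of "Cov2 H"] d2_Cov2 by blast
  show "symgroup2_family {d2 H, c3 H} = O2set"
    using A[of "{d2 H, c3 H}"] B[of "{d2 H, c3 H}"] d2_Cov2 c3_Cov2 by blast
qed

lemma three_std:
  assumes h: "H \<in> H4" and fam: "symgroup2_family {d2 H, c3 H} = O2set"
  shows "in_class (symgroup4 H) (Dn 4) \<or> in_class (symgroup4 H) (Dn 3) \<or> in_class (symgroup4 H) O2"
proof -
  have "rotz (2*pi/real 4) \<in> symgroup2_family {d2 H, c3 H}" using fam rotz_quarter_O2 by simp
  then have q: "act2 (rotz (2*pi/real 4)) (d2 H) = d2 H" "act2 (rotz (2*pi/real 4)) (c3 H) = c3 H"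
    by (simp_all add: symgroup2_family_def)
  have ud: "uni (d2 H)" by (rule uni_rotz_sym[OF d2_Sym2[OF h] q(1)]) simp
  have uc: "uni (c3 H)" by (rule uni_rotz_sym[OF c3_Sym2[OF h] q(2)]) simp
  have ni: "d2 H 1 1 \<noteq> d2 H 3 3"
  proof
    assume iso: "d2 H 1 1 = d2 H 3 3"
    have "rotx (pi/2) \<in> symgroup2_family {d2 H, c3 H}"
      using rotx_half_SO3 iso_fix[OF ud iso rotx_half_SO3] c3_iso[OF h ud iso]
      by (simp add: symgroup2_family_def act2_zero)
    then show False using fam rotx_half_notO2 by simp
  qed
  have c: "core H" by (rule core_from_K[OF h ud ni]) (use uc in \<open>simp add: c3_def\<close>)
  have sub: "symgroup4 H \<subseteq> O2set"
  proof
    fix g assume "g \<in> symgroup4 H"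
    then have g: "g \<in> SO3" "act4 g H = H" by (simp_all add: symgroup4_def)
    then have "act2 g (d2 H) = d2 H" using d2_equiv[OF conjunct1[OF SO3_orth[OF g(1)]]] by metis
    then show "g \<in> O2set" by (rule stab_uni[OF ud ni g(1)])
  qed
  have "d2 H 1 3 = 0" "d2 H 2 3 = 0" using ud by (simp_all add: uni_def)
  then show ?thesis by (rule core_main[OF c sub])
qed

lemma one_std:
  assumes h: "H \<in> H4" and fam: "symgroup2_family (Cov2 H) = O2set"
  shows "in_class (symgroup4 H) (Dn 4) \<or> in_class (symgroup4 H) (Dn 3) \<or> in_class (symgroup4 H) O2"
proof -
  have q: "rotz (2*pi/real 4) \<in> symgroup2_family (Cov2 H)" using fam rotz_quarter_O2 by simp
  have covuni: "uni M" if mc: "M \<in> Cov2 H" for M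
  proof -
    have F: "M \<in> Sym2" using Cov2_props[OF mc h] by metis
    have "act2 (rotz (2*pi/real 4)) M = M" using q mc by (simp add: symgroup2_family_def)
    then show ?thesis by (rule uni_rotz_sym[OF F]) simp
  qed
  have "\<exists>K. K \<in> Cov2 H \<and> K 1 1 \<noteq> K 3 3"
  proof (rule ccontr)
    assume nk: "\<not> (\<exists>K. K \<in> Cov2 H \<and> K 1 1 \<noteq> K 3 3)"
    then have iso: "K 1 1 = K 3 3" if "K \<in> Cov2 H" for K using that by blast
    have fixall: "act2 (rotx (pi/2)) M = M" if mc: "M \<in> Cov2 H" for M
      by (rule iso_fix[OF covuni[OF mc] iso[OF mc] rotx_half_SO3])
    have "rotx (pi/2) \<in> symgroup2_family (Cov2 H)"
      using rotx_half_SO3 fixall by (simp add: symgroup2_family_def)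
    then show False using fam rotx_half_notO2 by simp
  qed
  then obtain K where K: "K \<in> Cov2 H" "K 1 1 \<noteq> K 3 3" by blast
  obtain F where F: "equivariant_poly_map F" "K = F H" using K(1) unfolding Cov2_def by blast
  have "dcontr42 H K \<in> Cov2 H"
    unfolding Cov2_def
    by (rule CollectI, rule exI[where x="\<lambda>T. dcontr42 T (F T)"]) (simp add: F(2) equiv_dc[OF F(1)])
  then have c: "core H" by (rule core_from_K[OF h covuni[OF K(1)] K(2) covuni])
  have ud: "uni (d2 H)" by (rule covuni[OF d2_Cov2])
  have uK: "uni K" by (rule covuni[OF K(1)])
  have sub: "symgroup4 H \<subseteq> O2set"
  proof
    fix g assume "g \<in> symgroup4 H"
    then have g: "g \<in> SO3" "act4 g H = H" by (simp_all add: symgroup4_def)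
    have "F (act4 g H) = act2 g (F H)" using F(1) g(1) h by (simp add: equivariant_poly_map_def)
    then have "act2 g K = K" using F(2) g(2) by simp
    then show "g \<in> O2set" by (rule stab_uni[OF uK K(2) g(1)])
  qed
  have "d2 H 1 3 = 0" "d2 H 2 3 = 0" using ud by (simp_all add: uni_def)
  then show ?thesis by (rule core_main[OF c sub])
qed

lemma P1_tr:
  assumes "g \<in> SO3" "H \<in> H4"
  shows "in_class (symgroup2_family (Cov2 (act4 g H))) O2 \<longleftrightarrow> in_class (symgroup2_family (Cov2 H)) O2"
  by (simp add: Cov2_transport[OF assms] fam_transport[OF assms(1)] in_class_transport[OF assms(1)])

lemma P3_tr:
  assumes "g \<in> SO3"
  shows "in_class (symgroup2_family {d2 (act4 g H), c3 (act4 g H)}) O2 \<longleftrightarrow> in_class (symgroup2_family {d2 H, c3 H}) O2"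
  by (simp only: d2c3_transport[OF assms] fam_transport[OF assms] in_class_transport[OF assms])

lemma P2_tr:
  assumes "g \<in> SO3"
  shows "in_class (symgroup4 (act4 g H)) K \<longleftrightarrow> in_class (symgroup4 H) K"
  by (simp add: sym4_transport[OF assms] in_class_transport[OF assms])

lemma std_frame:
  assumes "H \<in> H4" "g \<in> SO3"
  shows "act4 (transpose g) H \<in> H4" "transpose g \<in> SO3"
  using H4_act4[OF conjunct1[OF SO3_orth[OF SO3_transpose[OF assms(2)]]] assms(1)] SO3_transpose[OF assms(2)]
  by simp_all

lemma P2_imp:
  assumes h: "H \<in> H4" and ic: "in_class (symgroup4 H) K" and K: "K = Dn 4 \<or> K = Dn 3 \<or> K = O2"
  shows "in_class (symgroup2_family (Cov2 H)) O2 \<and> in_class (symgroup2_family {d2 H, c3 H}) O2"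
proof -
  obtain g where g: "g \<in> SO3" "symgroup4 H = conj g ` K" using ic by (auto simp: in_class_conj)
  define H' where "H' = act4 (transpose g) H"
  have h': "H' \<in> H4" and gt: "transpose g \<in> SO3" using std_frame[OF h g(1)] by (simp_all add: H'_def)
  have "symgroup4 H' = conj (transpose g) ` conj g ` K" by (simp add: H'_def sym4_transport[OF gt] g(2))
  also have "\<dots> = K" by (rule conj_img_back[OF g(1)])
  finally have sK: "symgroup4 H' = K" .
  have e: "symgroup2_family (Cov2 H') = O2" "symgroup2_family {d2 H', c3 H'} = O2"
    using two_std[OF h'] sK K by (simp_all add: O2_eq)
  have "in_class (symgroup2_family (Cov2 H')) O2" "in_class (symgroup2_family {d2 H', c3 H'}) O2"
    unfolding e by (simp_all add: in_class_self)
  then show ?thesis unfolding H'_def using P1_tr[OF gt h] P3_tr[OF gt] by simp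
qed

theorem theorem9p5:
  fixes H :: tensor4
  assumes "H \<in> H4"
  shows "(in_class (symgroup2_family (Cov2 H)) O2
          \<longleftrightarrow> (in_class (symgroup4 H) (Dn 4) \<or> in_class (symgroup4 H) (Dn 3)
               \<or> in_class (symgroup4 H) O2))
       \<and> (in_class (symgroup4 H) (Dn 4) \<or> in_class (symgroup4 H) (Dn 3)
               \<or> in_class (symgroup4 H) O2
          \<longleftrightarrow> in_class (symgroup2_family {d2 H, c3 H}) O2)"
proof -
  note h = assms
  let ?P2 = "in_class (symgroup4 H) (Dn 4) \<or> in_class (symgroup4 H) (Dn 3) \<or> in_class (symgroup4 H) O2"
  have 21: "in_class (symgroup2_family (Cov2 H)) O2 \<and> in_class (symgroup2_family {d2 H, c3 H}) O2" if ?P2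
    using that P2_imp[OF h] by blast
  have 12: ?P2 if asm: "in_class (symgroup2_family (Cov2 H)) O2"
  proof -
    obtain g where g: "g \<in> SO3" "symgroup2_family (Cov2 H) = conj g ` O2" using asm by (auto simp: in_class_conj)
    define H' where "H' = act4 (transpose g) H"
    have h': "H' \<in> H4" and gt: "transpose g \<in> SO3" using std_frame[OF h g(1)] by (simp_all add: H'_def)
    have "symgroup2_family (Cov2 H') = conj (transpose g) ` conj g ` O2"
      by (simp add: H'_def Cov2_transport[OF gt h] fam_transport[OF gt] g(2))
    also have "\<dots> = O2set" by (simp add: conj_img_back[OF g(1)] O2_eq)
    finally have "in_class (symgroup4 H') (Dn 4) \<or> in_class (symgroup4 H') (Dn 3) \<or> in_class (symgroup4 H') O2"
      by (rule one_std[OF h'])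
    then show ?thesis unfolding H'_def P2_tr[OF gt] .
  qed
  have 32: ?P2 if asm: "in_class (symgroup2_family {d2 H, c3 H}) O2"
  proof -
    obtain g where g: "g \<in> SO3" "symgroup2_family {d2 H, c3 H} = conj g ` O2" using asm by (auto simp: in_class_conj)
    define H' where "H' = act4 (transpose g) H"
    have h': "H' \<in> H4" and gt: "transpose g \<in> SO3" using std_frame[OF h g(1)] by (simp_all add: H'_def)
    have "symgroup2_family {d2 H', c3 H'} = conj (transpose g) ` conj g ` O2"
      by (simp only: H'_def d2c3_transport[OF gt] fam_transport[OF gt] g(2))
    also have "\<dots> = O2set" by (simp add: conj_img_back[OF g(1)] O2_eq)
    finally have "in_class (symgroup4 H') (Dn 4) \<or> in_class (symgroup4 H') (Dn 3) \<or> in_class (symgroup4 H') O2"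
      by (rule three_std[OF h'])
    then show ?thesis unfolding H'_def P2_tr[OF gt] .
  qed
  show ?thesis using 21 12 32 by blast
qed

end
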